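(* Let $\mathcal H$ be a real Hilbert space, $t_0>0$, let $f:\mathcal H\to\mathbb R$ be convex and $\mathcal C^1$ with $L$-Lipschitz continuous gradient and nonempty set of minimizers. Let $\alpha>3$, $\gamma>0$, $\beta\ge0$, $\beta(t)=\gamma+\beta/t$, let $b\in]0,\alpha-1]$ and $$a(t)=t^2\left(1+\frac{(\alpha-b)\gamma t-\beta(\alpha+1-b)}{t^2-\alpha\gamma t-\beta(\alpha+1)}\right),\qquad m(t)=\max\big(t,\,L|a(t)\beta(t)|,\,L|a(t)|\beta(t)^2\big).$$ Let $e\in\mathcal C([t_0,+\infty[;\mathcal H)$ with $m(\cdot)e(\cdot)\in L^1(t_0,+\infty;\mathcal H)$, and let $x$ be a solution of $$\ddot x(t)+\frac\alpha t\dot x(t)+\nabla f\big(x(t)+\beta(t)\dot x(t)\big)+e(t)=0.$$ Then $x(t)$ converges weakly, as $t\to+\infty$, to a minimizer of $f$. *)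

theory Defs
  imports "HOL-Analysis.Analysis"
begin

definition weakly_converges_at_top :: "(real \<Rightarrow> 'a::real_inner) \<Rightarrow> 'a \<Rightarrow> bool" where
  "weakly_converges_at_top x z \<longleftrightarrow> (\<forall>v. ((\<lambda>t. inner (x t) v) \<longlongrightarrow> inner z v) at_top)"

end

theory Submission
  imports Defs "HOL-Library.Diagonal_Subsequence" "HOL-Real_Asymp.Real_Asymp"
begin

lemma aux_quad: fixes a q :: real assumes q: "q \<ge> 0" and h: "0 \<le> (a/(q+1)) * ((a/(q+1)) * q - 2*a)" shows "a = 0"
proof -
  define s where "s = a/(q+1)"
  have q1: "q + 1 \<noteq> 0" using q by simp
  have as: "a = s * (q+1)" unfolding s_def using q1 by simp
  have "0 \<le> s * (s * q - 2 * (s * (q+1)))" using h unfolding s_def[symmetric] as[symmetric] .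
  then have "0 \<le> - (s * s * (q + 2))" by (simp add: algebra_simps)
  moreover have "s * s * (q+2) \<ge> 0" using q by simp
  ultimately have "s * s * (q+2) = 0" by linarith
  then have "s = 0" using q by simp
  then show ?thesis using as by simp
qed
lemma proj_exists:
  fixes C :: "'a::{real_inner,complete_space} set"
  assumes clC: "closed C" and sC: "subspace C"
  shows "\<exists>p\<in>C. \<forall>c\<in>C. inner (v - p) c = 0"
proof -
  have C0: "0 \<in> C" using sC by (simp add: subspace_0)
  define d where "d = Inf ((\<lambda>p. (norm (v - p))\<^sup>2) ` C)"
  have bdd: "bdd_below ((\<lambda>p. (norm (v - p))\<^sup>2) ` C)" by (rule bdd_belowI[of _ 0]) auto
  have dle: "d \<le> (norm (v - p))\<^sup>2" if "p \<in> C" for p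
    unfolding d_def by (rule cINF_lower[OF bdd that])
  have "\<exists>p\<in>C. (norm (v - p))\<^sup>2 < d + 1 / (real n + 1)" for n
  proof -
    have "d < d + 1 / (real n + 1)" by simp
    then show ?thesis unfolding d_def using C0
      by (subst (asm) cINF_less_iff[OF _ bdd]) auto
  qed
  then obtain P where PC: "\<And>n. P n \<in> C" and Pd: "\<And>n. (norm (v - P n))\<^sup>2 < d + 1 / (real n + 1)"
    by metis
  have par: "(norm (P n - P m))\<^sup>2 \<le> 2 / (real n + 1) + 2 / (real m + 1)" for n m
  proof -
    have mid: "(1/2) *\<^sub>R (P n + P m) \<in> C" using PC sC by (simp add: subspace_add subspace_scale)
    have id: "(norm (P n - P m))\<^sup>2 = 2 * (norm (v - P n))\<^sup>2 + 2 * (norm (v - P m))\<^sup>2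
              - 4 * (norm (v - (1/2) *\<^sub>R (P n + P m)))\<^sup>2"
      by (simp add: power2_norm_eq_inner inner_diff_left inner_diff_right inner_add_left
          inner_add_right inner_commute algebra_simps)
    show ?thesis using dle[OF mid] Pd[of n] Pd[of m] unfolding id by linarith
  qed
  have "Cauchy P"
  proof (rule metric_CauchyI)
    fix e :: real assume e: "e > 0"
    obtain N :: nat where N: "4 / e\<^sup>2 < real N" using reals_Archimedean2 by blast
    show "\<exists>M. \<forall>m\<ge>M. \<forall>n\<ge>M. dist (P m) (P n) < e"
    proof (intro exI allI impI)
      fix m n assume mn: "N \<le> m" "N \<le> n"
      have "2 / (real m + 1) \<le> 2 / (real N + 1)" "2 / (real n + 1) \<le> 2 / (real N + 1)"
        using mn by (auto intro!: divide_left_mono)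
      moreover have "4 / (real N + 1) < e\<^sup>2"
      proof -
        have "4 < e\<^sup>2 * real N" using N e by (simp add: field_simps)
        also have "\<dots> \<le> e\<^sup>2 * (real N + 1)" using e by simp
        finally show ?thesis by (simp add: field_simps)
      qed
      ultimately have "(dist (P m) (P n))\<^sup>2 < e\<^sup>2" using par[of m n] by (simp add: dist_norm)
      then show "dist (P m) (P n) < e" using e by (meson power_less_imp_less_base less_le zero_le_dist)
    qed
  qed
  then obtain p where Pp: "P \<longlonglongrightarrow> p" using Cauchy_convergent_iff convergent_def by blast
  have pC: "p \<in> C" using clC PC Pp closed_sequentially by blast
  have L1: "((\<lambda>n. (norm (v - P n))\<^sup>2) \<longlongrightarrow> (norm (v - p))\<^sup>2) sequentially"
    by (intro tendsto_intros Pp)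
  have L2: "((\<lambda>n. d + 1 / (real n + 1)) \<longlongrightarrow> d) sequentially"
    using LIMSEQ_inverse_real_of_nat_add[of d] by (simp add: inverse_eq_divide add.commute)
  have ev: "\<forall>\<^sub>F n in sequentially. (norm (v - P n))\<^sup>2 \<le> d + 1 / (real n + 1)"
    using Pd less_imp_le by (intro always_eventually) blast
  have pd: "(norm (v - p))\<^sup>2 \<le> d"
    by (rule tendsto_le[OF sequentially_bot L2 L1 ev])
  show ?thesis
  proof (intro bexI[OF _ pC] ballI)
    fix c assume cC: "c \<in> C"
    define a where "a = inner (v - p) c"
    define s where "s = a / ((norm c)\<^sup>2 + 1)"
    have "p + s *\<^sub>R c \<in> C" using pC cC sC by (simp add: subspace_add subspace_scale)
    then have "(norm (v - p))\<^sup>2 \<le> (norm (v - (p + s *\<^sub>R c)))\<^sup>2" using dle pd order_trans by blast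
    also have "\<dots> = (norm (v - p))\<^sup>2 - 2 * s * a + s\<^sup>2 * (norm c)\<^sup>2"
      unfolding a_def by (simp only: power2_norm_eq_inner) (simp add: inner_diff_left inner_diff_right inner_add_left
          inner_add_right inner_commute algebra_simps power2_eq_square)
    finally have "0 \<le> s * (s * (norm c)\<^sup>2 - 2 * a)" by (simp add: algebra_simps power2_eq_square)
    then have "a = 0" unfolding s_def by (intro aux_quad[of "(norm c)\<^sup>2"]) auto
    then show "inner (v - p) c = 0" unfolding a_def by simp
  qed
qed

lemma weak_compact:
  fixes u :: "nat \<Rightarrow> 'a::{real_inner,complete_space}"
  assumes bnd: "\<And>n. norm (u n) \<le> M"
  shows "\<exists>r w. strict_mono r \<and> (\<forall>v. ((\<lambda>n. inner (u (r n)) v) \<longlongrightarrow> inner w v) sequentially)"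
proof -
  have M0: "M \<ge> 0" using bnd[of 0] norm_ge_zero order_trans by blast
  interpret S: subseqs "\<lambda>k s. convergent (\<lambda>n. inner (u (s n)) (u k))"
  proof
    fix k :: nat and s :: "nat \<Rightarrow> nat" assume "strict_mono s"
    have "bounded (range (\<lambda>n. inner (u (s n)) (u k)))"
    proof (rule boundedI)
      fix y assume "y \<in> range (\<lambda>n. inner (u (s n)) (u k))"
      then obtain n where y: "y = inner (u (s n)) (u k)" by auto
      have "norm y \<le> norm (u (s n)) * norm (u k)" unfolding y real_norm_def by (rule Cauchy_Schwarz_ineq2)
      also have "\<dots> \<le> M * M" using bnd M0 by (intro mult_mono) auto
      finally show "norm y \<le> M * M" .
    qed
    then obtain l r where "strict_mono r" "((\<lambda>n. inner (u (s n)) (u k)) \<circ> r) \<longlonglongrightarrow> l"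
      using bounded_imp_convergent_subsequence by blast
    then show "\<exists>r'. strict_mono r' \<and> convergent (\<lambda>n. inner (u ((s \<circ> r') n)) (u k))"
      by (auto simp: convergent_def o_def)
  qed
  define r where "r = S.diagseq"
  have r: "strict_mono r" unfolding r_def by (rule S.subseq_diagseq)
  have convk: "convergent (\<lambda>n. inner (u (r n)) (u k))" for k
  proof -
    have "convergent (\<lambda>n. inner (u ((S.diagseq \<circ> (+) (Suc k)) n)) (u k))"
    proof (rule S.diagseq_holds)
      fix r' :: "nat \<Rightarrow> nat" and s n assume "strict_mono r'" "convergent (\<lambda>m. inner (u (s m)) (u n))"
      then show "convergent (\<lambda>m. inner (u ((s \<circ> r') m)) (u n))"
        by (auto simp: convergent_def o_def intro: LIMSEQ_subseq_LIMSEQ[unfolded o_def])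
    qed
    then obtain l where "(\<lambda>n. inner (u (S.diagseq (n + Suc k))) (u k)) \<longlonglongrightarrow> l"
      by (auto simp: convergent_def o_def add.commute)
    then have "(\<lambda>n. inner (u (S.diagseq n)) (u k)) \<longlonglongrightarrow> l"
      by (rule LIMSEQ_offset[of "\<lambda>n. inner (u (S.diagseq n)) (u k)" "Suc k" l])
    then show ?thesis unfolding r_def convergent_def by blast
  qed
  define C where "C = {v. convergent (\<lambda>n. inner (u (r n)) v)}"
  have subC: "subspace C"
    unfolding subspace_def C_def
    by (auto simp: inner_add_right convergent_def intro: tendsto_add tendsto_mult_left)
  have uC: "range u \<subseteq> C" using convk unfolding C_def by auto
  have clC: "closed C"
  proof -
    have "closure C \<subseteq> C"
    proof
      fix v assume v: "v \<in> closure C"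
      have "Cauchy (\<lambda>n. inner (u (r n)) v)"
      proof (rule metric_CauchyI)
        fix e :: real assume e: "e > 0"
        obtain w where wC: "w \<in> C" and wv: "dist w v < e / (3 * (M + 1))"
          using v e M0 closure_approachable by (metis divide_pos_pos mult_pos_pos zero_less_numeral add_nonneg_pos zero_less_one)
        have "Cauchy (\<lambda>n. inner (u (r n)) w)" using wC unfolding C_def by (simp add: Cauchy_convergent_iff)
        then obtain N where N: "\<And>m n. m \<ge> N \<Longrightarrow> n \<ge> N \<Longrightarrow> dist (inner (u (r m)) w) (inner (u (r n)) w) < e / 3"
          using e by (meson metric_CauchyD zero_less_divide_iff zero_less_numeral)
        show "\<exists>N. \<forall>m\<ge>N. \<forall>n\<ge>N. dist (inner (u (r m)) v) (inner (u (r n)) v) < e"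
        proof (intro exI allI impI)
          fix m n assume mn: "N \<le> m" "N \<le> n"
          have eq: "inner (u (r m)) v - inner (u (r n)) v
              = (inner (u (r m)) w - inner (u (r n)) w) + inner (u (r m) - u (r n)) (v - w)"
            by (simp add: inner_diff_left inner_diff_right)
          have "\<bar>inner (u (r m) - u (r n)) (v - w)\<bar> \<le> norm (u (r m) - u (r n)) * norm (v - w)"
            by (rule Cauchy_Schwarz_ineq2)
          also have "\<dots> \<le> (2 * M) * (e / (3 * (M + 1)))"
          proof (rule mult_mono)
            show "norm (u (r m) - u (r n)) \<le> 2 * M"
              using norm_triangle_ineq4[of "u (r m)" "u (r n)"] bnd[of "r m"] bnd[of "r n"] by linarith
            show "norm (v - w) \<le> e / (3 * (M + 1))" using wv by (simp add: dist_norm norm_minus_commute)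
          qed (use M0 in auto)
          also have "\<dots> < 2 * (e / 3)"
          proof -
            have "(2 * M) * (e / (3 * (M + 1))) = 2 * (e / 3) * (M / (M + 1))" by (simp add: field_simps)
            also have "\<dots> < 2 * (e / 3) * 1" using M0 e by (intro mult_strict_left_mono) auto
            finally show ?thesis by simp
          qed
          finally have "\<bar>inner (u (r m) - u (r n)) (v - w)\<bar> < 2 * (e / 3)" .
          moreover have "\<bar>inner (u (r m)) w - inner (u (r n)) w\<bar> < e / 3" using N[OF mn] by (simp add: dist_real_def)
          ultimately show "dist (inner (u (r m)) v) (inner (u (r n)) v) < e"
            unfolding dist_real_def eq by linarith
        qed
      qed
      then show "v \<in> C" unfolding C_def by (simp add: Cauchy_convergent_iff)
    qed
    then show ?thesis using closure_subset_eq by blast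
  qed
  have allconv: "convergent (\<lambda>n. inner (u (r n)) v)" for v
  proof -
    obtain p where pK: "p \<in> C" and pp: "\<forall>c\<in>C. inner (v - p) c = 0" using proj_exists[OF clC subC] by blast
    have "inner (u (r n)) v = inner (u (r n)) p" for n
    proof -
      have "inner (v - p) (u (r n)) = 0" using pp uC by auto
      then show ?thesis by (simp add: inner_diff_left inner_commute)
    qed
    moreover have "convergent (\<lambda>n. inner (u (r n)) p)" using pK unfolding C_def by auto
    ultimately show ?thesis by simp
  qed
  define \<phi> where "\<phi> v = lim (\<lambda>n. inner (u (r n)) v)" for v
  have phiL: "(\<lambda>n. inner (u (r n)) v) \<longlonglongrightarrow> \<phi> v" for v
    unfolding \<phi>_def using allconv convergent_LIMSEQ_iff by blast
  have phi_add: "\<phi> (a + b) = \<phi> a + \<phi> b" for a b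
    using tendsto_add[OF phiL[of a] phiL[of b]] phiL[of "a+b"] LIMSEQ_unique by (simp add: inner_add_right) blast
  have phi_scale: "\<phi> (c *\<^sub>R a) = c * \<phi> a" for c a
    using tendsto_mult_left[OF phiL[of a], of c] phiL[of "c *\<^sub>R a"] LIMSEQ_unique by (simp add: inner_scaleR_right) blast
  have phi_bnd: "norm (\<phi> a) \<le> norm a * M" for a
  proof -
    have "norm (inner (u (r n)) a) \<le> norm a * M" for n
    proof -
      have "norm (inner (u (r n)) a) \<le> norm (u (r n)) * norm a" unfolding real_norm_def by (rule Cauchy_Schwarz_ineq2)
      also have "\<dots> \<le> M * norm a" using bnd by (intro mult_right_mono) auto
      finally show ?thesis by (simp add: mult.commute)
    qed
    then have "\<forall>\<^sub>F n in sequentially. norm (inner (u (r n)) a) \<le> norm a * M" by simp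
    then show ?thesis using tendsto_norm[OF phiL[of a]] by (intro tendsto_upperbound) auto
  qed
  have phi0: "\<phi> 0 = 0" using phi_scale[of 0 0] by simp
  have phi_diff: "\<phi> (a - b) = \<phi> a - \<phi> b" for a b
    using phi_add[of "a - b" b] by simp
  have bl: "bounded_linear \<phi>" by (rule bounded_linear_intro[OF phi_add _ phi_bnd]) (simp add: phi_scale)
  show ?thesis
  proof (cases "\<forall>v. \<phi> v = 0")
    case True
    then show ?thesis using r phiL by (intro exI[of _ r] exI[of _ 0]) auto
  next
    case False
    then obtain v0 where v0: "\<phi> v0 \<noteq> 0" by blast
    define N where "N = {v. \<phi> v = 0}"
    have clN: "closed N" unfolding N_def
    proof -
      have "isCont \<phi> x" for x using bounded_linear.isCont[OF bl continuous_ident] .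
      then show "closed {v. \<phi> v = 0}" using continuous_closed_vimage[of "{0}" \<phi>] by (simp add: vimage_def)
    qed
    have subN: "subspace N" unfolding N_def subspace_def by (simp add: phi_add phi_scale phi0)
    obtain p where pN: "p \<in> N" and pp: "\<forall>c\<in>N. inner (v0 - p) c = 0" using proj_exists[OF clN subN] by blast
    define w0 where "w0 = v0 - p"
    have phw0: "\<phi> w0 = \<phi> v0" using pN unfolding w0_def N_def
      by (simp add: phi_diff)
    have w0nz: "inner w0 w0 \<noteq> 0" using phw0 v0 phi0 by auto
    have rep: "\<phi> v = inner ((\<phi> w0 / inner w0 w0) *\<^sub>R w0) v" for v
    proof -
      have "v - (\<phi> v / \<phi> w0) *\<^sub>R w0 \<in> N" unfolding N_def using phw0 v0
        by (simp add: phi_diff phi_scale)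
      then have "inner w0 (v - (\<phi> v / \<phi> w0) *\<^sub>R w0) = 0" using pp unfolding w0_def by blast
      then have "inner w0 v = (\<phi> v / \<phi> w0) * inner w0 w0" by (simp add: inner_diff_right)
      then have "\<phi> v = \<phi> w0 * inner w0 v / inner w0 w0" using w0nz phw0 v0 by simp
      then show ?thesis by (simp add: inner_scaleR_left)
    qed
    have "\<forall>v. ((\<lambda>n. inner (u (r n)) v) \<longlongrightarrow> inner ((\<phi> w0 / inner w0 w0) *\<^sub>R w0) v) sequentially"
      using phiL rep by metis
    then show ?thesis using r by blast
  qed
qed

lemma opial:
  fixes X :: "real \<Rightarrow> 'a::{real_inner,complete_space}"
  assumes bnd: "\<And>t. t \<ge> T \<Longrightarrow> norm (X t) \<le> M"
    and lim: "\<And>z. z \<in> S \<Longrightarrow> \<exists>l. ((\<lambda>t. norm (X t - z)) \<longlongrightarrow> l) at_top"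
    and clus: "\<And>s u. filterlim s at_top sequentially \<Longrightarrow>
                 (\<forall>v. ((\<lambda>n. inner (X (s n)) v) \<longlongrightarrow> inner u v) sequentially) \<Longrightarrow> u \<in> S"
  shows "\<exists>z\<in>S. weakly_converges_at_top X z"
proof -
  have wc: "\<exists>s u. filterlim s at_top sequentially \<and> u \<in> S \<and> (\<forall>n. s n \<in> range s0) \<and>
              (\<forall>v. ((\<lambda>n. inner (X (s n)) v) \<longlongrightarrow> inner u v) sequentially)"
    if s0T: "\<And>n. s0 n \<ge> T + real n" for s0 :: "nat \<Rightarrow> real"
  proof -
    have "norm (X (s0 n)) \<le> M" for n proof - have "T \<le> s0 n" using s0T[of n] by (smt (verit) of_nat_0_le_iff) then show ?thesis by (rule bnd) qed
    then obtain r u where r: "strict_mono r" and ru: "\<forall>v. ((\<lambda>n. inner (X (s0 (r n))) v) \<longlongrightarrow> inner u v) sequentially"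
      using weak_compact[of "\<lambda>n. X (s0 n)" M] by blast
    have f0: "filterlim (\<lambda>n. T + real n) at_top sequentially"
      by (intro filterlim_tendsto_add_at_top[OF tendsto_const] filterlim_real_sequentially)
    have ev: "\<forall>\<^sub>F n in sequentially. T + real n \<le> s0 n" by (intro always_eventually allI s0T)
    have f1: "filterlim s0 at_top sequentially"
      by (rule filterlim_at_top_mono[OF f0 ev])
    have fs0: "filterlim (\<lambda>n. s0 (r n)) at_top sequentially"
      by (rule filterlim_compose[OF f1 filterlim_subseq[OF r]])
    then have fs: "filterlim (s0 \<circ> r) at_top sequentially" by (simp only: o_def)
    have "u \<in> S" by (rule clus[OF fs0 ru])
    then show ?thesis using fs ru by (intro exI[of _ "s0 \<circ> r"] exI[of _ u]) auto
  qed
  obtain s1 u1 where s1: "filterlim s1 at_top sequentially" and u1S: "u1 \<in> S"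
    and u1: "\<forall>v. ((\<lambda>n. inner (X (s1 n)) v) \<longlongrightarrow> inner u1 v) sequentially"
    using wc[of "\<lambda>n. T + real n"] by auto
  have "weakly_converges_at_top X u1"
    unfolding weakly_converges_at_top_def
  proof (rule allI, rule ccontr)
    fix v assume nc: "\<not> ((\<lambda>t. inner (X t) v) \<longlongrightarrow> inner u1 v) at_top"
    then obtain e where e: "e > 0" and ne: "\<not> eventually (\<lambda>t. dist (inner (X t) v) (inner u1 v) < e) at_top"
      unfolding tendsto_iff by blast
    have "\<forall>N. \<exists>t. t \<ge> N \<and> dist (inner (X t) v) (inner u1 v) \<ge> e"
      using ne unfolding eventually_at_top_linorder by (simp add: not_less)
    from choice[OF this] obtain s2 where s2e0: "\<forall>N. s2 N \<ge> N \<and> dist (inner (X (s2 N)) v) (inner u1 v) \<ge> e"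
      by blast
    have s2: "\<And>N. s2 N \<ge> N" and s2e: "\<And>N. dist (inner (X (s2 N)) v) (inner u1 v) \<ge> e"
      using s2e0 by auto
    obtain s3 u2 where s3: "filterlim s3 at_top sequentially" and u2S: "u2 \<in> S"
      and s3r: "\<forall>n. s3 n \<in> range (\<lambda>n. s2 (T + real n))"
      and u2: "\<forall>v. ((\<lambda>n. inner (X (s3 n)) v) \<longlongrightarrow> inner u2 v) sequentially"
    proof -
      have "s2 (T + real n) \<ge> T + real n" for n using s2 by blast
      from wc[of "\<lambda>n. s2 (T + real n)", OF this] show ?thesis using that by blast
    qed
    obtain l1 where l1: "((\<lambda>t. norm (X t - u1)) \<longlongrightarrow> l1) at_top" using lim u1S by blast
    obtain l2 where l2: "((\<lambda>t. norm (X t - u2)) \<longlongrightarrow> l2) at_top" using lim u2S by blast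
    define \<Phi> where "\<Phi> t = (norm (X t - u1))\<^sup>2 - (norm (X t - u2))\<^sup>2" for t
    have \<Phi>eq: "\<Phi> t = 2 * inner (X t) (u2 - u1) + (norm u1)\<^sup>2 - (norm u2)\<^sup>2" for t
      unfolding \<Phi>_def by (simp only: power2_norm_eq_inner) (simp add: inner_diff_left inner_diff_right inner_commute)
    have \<Phi>l: "(\<Phi> \<longlongrightarrow> l1\<^sup>2 - l2\<^sup>2) at_top" unfolding \<Phi>_def by (intro tendsto_intros l1 l2)
    have A: "((\<lambda>n. \<Phi> (s1 n)) \<longlongrightarrow> 2 * inner u1 (u2 - u1) + (norm u1)\<^sup>2 - (norm u2)\<^sup>2) sequentially"
      unfolding \<Phi>eq by (intro tendsto_intros u1[rule_format])
    have B: "((\<lambda>n. \<Phi> (s3 n)) \<longlongrightarrow> 2 * inner u2 (u2 - u1) + (norm u1)\<^sup>2 - (norm u2)\<^sup>2) sequentially"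
      unfolding \<Phi>eq by (intro tendsto_intros u2[rule_format])
    have A': "((\<lambda>n. \<Phi> (s1 n)) \<longlongrightarrow> l1\<^sup>2 - l2\<^sup>2) sequentially" using filterlim_compose[OF \<Phi>l s1] by (simp add: o_def)
    have B': "((\<lambda>n. \<Phi> (s3 n)) \<longlongrightarrow> l1\<^sup>2 - l2\<^sup>2) sequentially" using filterlim_compose[OF \<Phi>l s3] by (simp add: o_def)
    have "2 * inner u1 (u2 - u1) + (norm u1)\<^sup>2 - (norm u2)\<^sup>2 = 2 * inner u2 (u2 - u1) + (norm u1)\<^sup>2 - (norm u2)\<^sup>2"
      using LIMSEQ_unique[OF A A'] LIMSEQ_unique[OF B B'] by simp
    then have "inner (u2 - u1) (u2 - u1) = 0" by (simp add: inner_diff_left)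
    then have u12: "u2 = u1" by simp
    have "((\<lambda>n. inner (X (s3 n)) v) \<longlongrightarrow> inner u1 v) sequentially" using u2 u12 by simp
    then have "eventually (\<lambda>n. dist (inner (X (s3 n)) v) (inner u1 v) < e) sequentially"
      using e by (rule tendstoD)
    moreover have "dist (inner (X (s3 n)) v) (inner u1 v) \<ge> e" for n
    proof -
      obtain m where "s3 n = s2 (T + real m)" using s3r by blast
      then show ?thesis using s2e by simp
    qed
    ultimately show False unfolding eventually_sequentially by (meson le_refl not_le)
  qed
  then show ?thesis using u1S by blast
qed

lemma inner_hvd:
  assumes A: "(a has_vector_derivative a') (at t)" and B: "(b has_vector_derivative b') (at t)"
  shows "((\<lambda>s. inner (a s) (b s)) has_real_derivative (inner a' (b t) + inner (a t) b')) (at t)"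
proof -
  have "((\<lambda>s. inner (a s) (b s)) has_derivative (\<lambda>h. inner (a t) (h *\<^sub>R b') + inner (h *\<^sub>R a') (b t))) (at t)"
    using has_derivative_inner[OF A[unfolded has_vector_derivative_def] B[unfolded has_vector_derivative_def]] by simp
  then show ?thesis unfolding has_field_derivative_def
    by (rule has_derivative_eq_rhs) (auto simp: algebra_simps)
qed

lemma chain_hvd:
  assumes fd: "(f has_derivative (\<lambda>h. inner G h)) (at (y t))" and yd: "(y has_vector_derivative y') (at t)"
  shows "((\<lambda>s. f (y s)) has_real_derivative inner G y') (at t)"
proof -
  have "((\<lambda>s. f (y s)) has_derivative (\<lambda>h. inner G (h *\<^sub>R y'))) (at t)"
    using has_derivative_compose[OF yd[unfolded has_vector_derivative_def] fd] by (simp add: o_def)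
  then show ?thesis unfolding has_field_derivative_def
    by (rule has_derivative_eq_rhs) (auto simp: algebra_simps)
qed

lemma subgrad:
  fixes f :: "'a::real_inner \<Rightarrow> real"
  assumes conv: "convex_on UNIV f" and fd: "\<And>y. (f has_derivative (\<lambda>h. inner (g y) h)) (at y)"
  shows "f w \<ge> f u + inner (g u) (w - u)"
proof -
  define \<phi> where "\<phi> s = f (u + s *\<^sub>R (w - u))" for s :: real
  have cphi: "convex_on UNIV \<phi>"
  proof (rule convex_onI)
    fix s1 s2 t :: real assume t: "0 < t" "t < 1"
    have "u + ((1 - t) * s1 + t * s2) *\<^sub>R (w - u) = (1 - t) *\<^sub>R (u + s1 *\<^sub>R (w - u)) + t *\<^sub>R (u + s2 *\<^sub>R (w - u))"
      by (simp add: algebra_simps)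
    then show "\<phi> ((1 - t) *\<^sub>R s1 + t *\<^sub>R s2) \<le> (1 - t) * \<phi> s1 + t * \<phi> s2"
      unfolding \<phi>_def using convex_onD[OF conv, of t "u + s1 *\<^sub>R (w - u)" "u + s2 *\<^sub>R (w - u)"] t by simp
  qed simp
  have "((\<lambda>s. u + s *\<^sub>R (w - u)) has_vector_derivative (w - u)) (at 0)"
    by (auto intro!: derivative_eq_intros)
  then have "(\<phi> has_real_derivative inner (g u) (w - u)) (at 0)"
    unfolding \<phi>_def using chain_hvd[of f "g u" "\<lambda>s. u + s *\<^sub>R (w - u)" 0 "w - u"] fd by simp
  then have "\<phi> 1 - \<phi> 0 \<ge> inner (g u) (w - u) * (1 - 0)"
    by (intro convex_on_imp_above_tangent[OF cphi]) auto
  then show ?thesis unfolding \<phi>_def by simp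
qed

lemma alg_id:
  fixes t b kd K F c B vv pv pG vG GG pe ve Ge al :: real
  assumes t: "t \<noteq> 0" and Kc: "K * c = t^2 - t * b * B"
  shows "kd * F + K * (c * vG - B * GG - B * Ge) + t * vv + t^2 * (-(al/t) * vv - vG - ve) + b * pv
         + b * t * (vv + (-(al/t) * pv - pG - pe)) + b * (al-1) * pv
       = (kd - t * b) * F - (al-1-b) * t * vv - K * B * GG - K * B * Ge - t * (b * pe + t * ve) - t * b * (pG + B * vG - F)"
proof -
  have "K * (c * vG) = (t^2 - t * b * B) * vG" using Kc by (simp add: mult.assoc[symmetric])
  then show ?thesis using t by (simp add: algebra_simps power2_eq_square)
qed

locale dyn =
  fixes f :: "'a::{real_inner,complete_space} \<Rightarrow> real" and g :: "'a \<Rightarrow> 'a"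
    and L t0 \<alpha> \<gamma> \<beta> Ti :: real and x x' x'' e :: "real \<Rightarrow> 'a"
  assumes t0: "t0 > 0" and conv: "convex_on UNIV f"
    and fg: "\<And>y. (f has_derivative (\<lambda>h. inner (g y) h)) (at y)"
    and lip: "\<And>u w. norm (g u - g w) \<le> L * norm (u - w)" and L0: "L \<ge> 0"
    and al3: "\<alpha> > 3" and ga0: "\<gamma> > 0" and be0: "\<beta> \<ge> 0"
    and ecnt: "continuous_on {t0..} e"
    and Ti: "Ti \<ge> t0"
    and eint: "set_integrable lborel {Ti..} (\<lambda>t. (t + L * t\<^sup>2) * norm (e t))"
    and xd: "\<And>t. t > t0 \<Longrightarrow> (x has_vector_derivative x' t) (at t)"
    and x'd: "\<And>t. t > t0 \<Longrightarrow> (x' has_vector_derivative x'' t) (at t)"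
    and ode: "\<And>t. t > t0 \<Longrightarrow> x'' t + (\<alpha> / t) *\<^sub>R x' t + g (x t + (\<gamma> + \<beta> / t) *\<^sub>R x' t) + e t = 0"
begin

definition "bt t = \<gamma> + \<beta> / t"
definition "D t = t\<^sup>2 - \<alpha> * \<gamma> * t - \<beta> * (\<alpha> + 1)"
definition "kk b t = t\<^sup>2 * (t\<^sup>2 - b * \<gamma> * t - b * \<beta>) / D t"
definition "kkd b t = ((4 * t^3 - 3 * b * \<gamma> * t\<^sup>2 - 2 * b * \<beta> * t) * D t
                      - (t^4 - b * \<gamma> * t^3 - b * \<beta> * t\<^sup>2) * (2 * t - \<alpha> * \<gamma>)) / (D t)\<^sup>2"
definition "y t = x t + bt t *\<^sub>R x' t"
definition "F z t = f (y t) - f z"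
definition "EE z b t = kk b t * F z t + t\<^sup>2 / 2 * inner (x' t) (x' t) + b * t * inner (x t - z) (x' t)
                       + b * (\<alpha> - 1) / 2 * inner (x t - z) (x t - z)"
definition "EEd z b t = (kkd b t - t * b) * F z t - (\<alpha> - 1 - b) * t * inner (x' t) (x' t)
     - kk b t * bt t * inner (g (y t)) (g (y t)) - kk b t * bt t * inner (g (y t)) (e t)
     - t * inner (b *\<^sub>R (x t - z) + t *\<^sub>R x' t) (e t) - t * b * (inner (y t - z) (g (y t)) - F z t)"

lemma kk_deriv: assumes "D t \<noteq> 0" shows "(kk b has_real_derivative kkd b t) (at t)"
proof -
  have D: "((\<lambda>s. D s) has_real_derivative 2 * t - \<alpha> * \<gamma>) (at t)"
    unfolding D_def by (auto intro!: derivative_eq_intros)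
  have N: "((\<lambda>s. s^4 - b * \<gamma> * s^3 - b * \<beta> * s\<^sup>2) has_real_derivative 4 * t^3 - 3 * b * \<gamma> * t\<^sup>2 - 2 * b * \<beta> * t) (at t)"
    by (auto intro!: derivative_eq_intros simp: power2_eq_square power3_eq_cube)
  have eq: "kk b = (\<lambda>s. (s^4 - b * \<gamma> * s^3 - b * \<beta> * s\<^sup>2) / D s)"
    unfolding kk_def by (rule ext) (simp add: algebra_simps power2_eq_square power3_eq_cube power4_eq_xxxx)
  show ?thesis unfolding eq kkd_def
    using DERIV_divide[OF N D assms] by (simp add: power2_eq_square)
qed

lemma kk_id: assumes "D t \<noteq> 0" "t \<noteq> 0"
  shows "kk b t * (1 - \<beta> / t\<^sup>2 - \<alpha> * bt t / t) = t\<^sup>2 - t * b * bt t"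
proof -
  have "1 - \<beta> / t\<^sup>2 - \<alpha> * bt t / t = D t / t\<^sup>2"
    unfolding D_def bt_def using assms(2) by (simp add: field_simps power2_eq_square)
  then show ?thesis unfolding kk_def bt_def using assms by (simp add: field_simps power2_eq_square)
qed

lemma y_deriv: assumes "t > t0"
  shows "(y has_vector_derivative (x' t + ((- \<beta> / t\<^sup>2) *\<^sub>R x' t + bt t *\<^sub>R x'' t))) (at t)"
proof -
  have t: "t \<noteq> 0" using assms t0 by simp
  have b: "(bt has_real_derivative - \<beta> / t\<^sup>2) (at t)"
    unfolding bt_def[abs_def] using t by (auto intro!: derivative_eq_intros simp: power2_eq_square)
  have "((\<lambda>s. x s + bt s *\<^sub>R x' s) has_vector_derivative (x' t + (bt t *\<^sub>R x'' t + (- \<beta> / t\<^sup>2) *\<^sub>R x' t))) (at t)"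
    by (intro has_vector_derivative_add xd assms has_vector_derivative_scaleR b x'd)
  then show ?thesis unfolding y_def[abs_def] by (simp add: algebra_simps)
qed

lemma EE_deriv: assumes t: "t > t0" and Dt: "D t \<noteq> 0"
  shows "(EE z b has_real_derivative EEd z b t) (at t)"
proof -
  have t0': "t \<noteq> 0" using t t0 by simp
  define v where "v = x' t"
  define p where "p = x t - z"
  define G where "G = g (y t)"
  define yd where "yd = x' t + ((- \<beta> / t\<^sup>2) *\<^sub>R x' t + bt t *\<^sub>R x'' t)"
  have xdd: "x'' t = - ((\<alpha> / t) *\<^sub>R v + G + e t)"
    using ode[OF t] unfolding v_def G_def y_def bt_def by (simp add: algebra_simps eq_neg_iff_add_eq_0)
  have d1: "((\<lambda>s. F z s) has_real_derivative inner G yd) (at t)"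
    unfolding F_def G_def yd_def
    by (intro DERIV_diff[where E=0, simplified] chain_hvd[OF fg] y_deriv t DERIV_const)
  have xz: "((\<lambda>s. x s - z) has_vector_derivative x' t) (at t)"
    using has_vector_derivative_diff[OF xd[OF t] has_vector_derivative_const[of z]] by simp
  have d2: "((\<lambda>s. inner (x' s) (x' s)) has_real_derivative inner (x'' t) v + inner v (x'' t)) (at t)"
    unfolding v_def by (intro inner_hvd x'd t)
  have d3: "((\<lambda>s. inner (x s - z) (x' s)) has_real_derivative inner v v + inner p (x'' t)) (at t)"
    unfolding v_def p_def by (intro inner_hvd x'd t xz)
  have d4: "((\<lambda>s. inner (x s - z) (x s - z)) has_real_derivative inner v p + inner p v) (at t)"
    unfolding v_def p_def by (intro inner_hvd x'd t xz)
  have e1: "((\<lambda>s. kk b s * F z s) has_real_derivative kkd b t * F z t + inner G yd * kk b t) (at t)"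
    by (rule DERIV_mult[OF kk_deriv[OF Dt] d1])
  have s2: "((\<lambda>s. s\<^sup>2 / 2) has_real_derivative t) (at t)"
    by (auto intro!: derivative_eq_intros)
  have e2: "((\<lambda>s. s\<^sup>2 / 2 * inner (x' s) (x' s)) has_real_derivative
             t * inner v v + (inner (x'' t) v + inner v (x'' t)) * (t\<^sup>2 / 2)) (at t)"
    using DERIV_mult[OF s2 d2] unfolding v_def .
  have s3: "((\<lambda>s. b * s) has_real_derivative b) (at t)"
    by (auto intro!: derivative_eq_intros)
  have e3: "((\<lambda>s. b * s * inner (x s - z) (x' s)) has_real_derivative
             b * inner p v + (inner v v + inner p (x'' t)) * (b * t)) (at t)"
    using DERIV_mult[OF s3 d3] unfolding v_def p_def .
  have e4: "((\<lambda>s. b * (\<alpha> - 1) / 2 * inner (x s - z) (x s - z)) has_real_derivative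
             b * (\<alpha> - 1) / 2 * (inner v p + inner p v)) (at t)"
    by (rule DERIV_cmult[OF d4])
  have "(EE z b has_real_derivative
        (kkd b t * F z t + inner G yd * kk b t) + (t * inner v v + (inner (x'' t) v + inner v (x'' t)) * (t\<^sup>2 / 2))
      + (b * inner p v + (inner v v + inner p (x'' t)) * (b * t)) + b * (\<alpha> - 1) / 2 * (inner v p + inner p v)) (at t)"
    unfolding EE_def[abs_def] by (intro DERIV_add e1 e2 e3 e4)
  moreover have "(kkd b t * F z t + inner G yd * kk b t) + (t * inner v v + (inner (x'' t) v + inner v (x'' t)) * (t\<^sup>2 / 2))
      + (b * inner p v + (inner v v + inner p (x'' t)) * (b * t)) + b * (\<alpha> - 1) / 2 * (inner v p + inner p v) = EEd z b t"
  proof -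
    have yz: "y t - z = p + bt t *\<^sub>R v" unfolding y_def p_def v_def by simp
    have ydv: "yd = (1 - \<beta> / t\<^sup>2 - \<alpha> * bt t / t) *\<^sub>R v - bt t *\<^sub>R G - bt t *\<^sub>R e t"
      unfolding yd_def xdd v_def by (simp add: algebra_simps)
    have "(kkd b t * F z t + inner G yd * kk b t) + (t * inner v v + (inner (x'' t) v + inner v (x'' t)) * (t\<^sup>2 / 2))
      + (b * inner p v + (inner v v + inner p (x'' t)) * (b * t)) + b * (\<alpha> - 1) / 2 * (inner v p + inner p v)
      = kkd b t * F z t + kk b t * ((1 - \<beta> / t\<^sup>2 - \<alpha> * bt t / t) * inner v G - bt t * inner G G - bt t * inner G (e t))
        + t * inner v v + t^2 * (-(\<alpha>/t) * inner v v - inner v G - inner v (e t)) + b * inner p v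
        + b * t * (inner v v + (-(\<alpha>/t) * inner p v - inner p G - inner p (e t))) + b * (\<alpha>-1) * inner p v"
      unfolding ydv xdd by (simp add: inner_diff_left inner_diff_right inner_add_left inner_add_right inner_commute
          algebra_simps power2_eq_square) (simp add: field_simps)
    also have "\<dots> = (kkd b t - t * b) * F z t - (\<alpha>-1-b) * t * inner v v - kk b t * bt t * inner G G
        - kk b t * bt t * inner G (e t) - t * (b * inner p (e t) + t * inner v (e t)) - t * b * (inner p G + bt t * inner v G - F z t)"
      by (rule alg_id[OF t0' kk_id[OF Dt t0']])
    also have "\<dots> = EEd z b t"
      unfolding EEd_def yz G_def[symmetric] v_def[symmetric] p_def[symmetric]
      by (simp add: inner_add_left inner_add_right inner_commute algebra_simps)
    finally show ?thesis .
  qed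
  ultimately show ?thesis by simp
qed

end

context dyn begin

lemma lim_kk: "((\<lambda>t. kk b t / t\<^sup>2) \<longlongrightarrow> 1) at_top"
  unfolding kk_def D_def by real_asymp

lemma lim_kkd: "((\<lambda>t. kkd b t / t) \<longlongrightarrow> 2) at_top"
  unfolding kkd_def D_def by real_asymp

lemma lim_kkdiff: "((\<lambda>t. t\<^sup>2 * bt t / D t) \<longlongrightarrow> \<gamma>) at_top"
  unfolding bt_def D_def by real_asymp

lemma ev_D: "eventually (\<lambda>t. D t > 0) at_top"
  unfolding D_def by real_asymp

end

lemma deriv_noninc:
  fixes P P' :: "real \<Rightarrow> real"
  assumes d: "\<And>t. t \<ge> T \<Longrightarrow> (P has_real_derivative P' t) (at t)"
    and n: "\<And>t. t \<ge> T \<Longrightarrow> P' t \<le> 0" and st: "T \<le> s" "s \<le> t"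
  shows "P t \<le> P s"
proof (rule DERIV_nonpos_imp_nonincreasing[OF st(2)])
  fix x assume "s \<le> x" "x \<le> t"
  then show "\<exists>y. (P has_real_derivative y) (at x) \<and> y \<le> 0"
    using d[of x] n[of x] st by (intro exI[of _ "P' x"]) auto
qed

lemma mono_conv:
  fixes P :: "real \<Rightarrow> real"
  assumes m: "\<And>s t. T \<le> s \<Longrightarrow> s \<le> t \<Longrightarrow> P t \<le> P s" and b: "\<And>t. T \<le> t \<Longrightarrow> c \<le> P t"
  shows "\<exists>l. (P \<longlongrightarrow> l) at_top"
proof -
  define l where "l = Inf (P ` {T..})"
  have bdd: "bdd_below (P ` {T..})" using b by (intro bdd_belowI[of _ c]) auto
  have lP: "l \<le> P t" if "t \<ge> T" for t unfolding l_def using bdd that by (auto intro: cInf_lower)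
  have "(P \<longlongrightarrow> l) at_top"
  proof (rule tendstoI)
    fix e :: real assume e: "e > 0"
    have "l < l + e" using e by simp
    then obtain t1 where t1: "t1 \<ge> T" "P t1 < l + e"
      unfolding l_def using bdd by (subst (asm) cInf_less_iff) auto
    show "\<forall>\<^sub>F t in at_top. dist (P t) l < e"
      unfolding eventually_at_top_linorder
    proof (intro exI[of _ t1] allI impI)
      fix t assume "t \<ge> t1"
      then have "P t \<le> P t1" "l \<le> P t" using m[OF t1(1)] lP t1(1) by auto
      then show "dist (P t) l < e" using t1 by (simp add: dist_real_def)
    qed
  qed
  then show ?thesis by blast
qed

lemma ode_lim:
  fixes h h' :: "real \<Rightarrow> real"
  assumes a: "a > 0" and T: "T > 0" and d: "\<And>t. t \<ge> T \<Longrightarrow> (h has_real_derivative h' t) (at t)"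
    and q: "((\<lambda>t. a * h t + t * h' t) \<longlongrightarrow> q) at_top"
  shows "(h \<longlongrightarrow> q / a) at_top"
proof (rule tendstoI)
  fix e :: real assume e: "e > 0"
  define e1 where "e1 = e * a / 2"
  have e1: "e1 > 0" using e a unfolding e1_def by simp
  obtain T1 where T1: "\<And>t. t \<ge> T1 \<Longrightarrow> dist (a * h t + t * h' t) q < e1"
    using tendstoD[OF q e1] unfolding eventually_at_top_linorder by blast
  define T2 where "T2 = max T T1"
  have T2: "T2 > 0" "T2 \<ge> T" "T2 \<ge> T1" using T unfolding T2_def by auto
  define u where "u t = t powr a * (h t - q / a)" for t
  define ud where "ud t = a * t powr (a - 1) * (h t - q / a) + t powr a * h' t" for t
  have ud: "(u has_real_derivative ud t) (at t)" if "t \<ge> T2" for t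
  proof -
    have tp: "t > 0" using that T2 by simp
    show ?thesis unfolding u_def[abs_def] ud_def
      using that T2 tp a by (auto intro!: derivative_eq_intros d simp: algebra_simps)
  qed
  have ud_eq: "ud t = t powr (a - 1) * (a * h t + t * h' t - q)" if "t > 0" for t
    unfolding ud_def using that a by (simp add: powr_diff field_simps powr_add)
  have ud_le: "\<bar>ud t\<bar> \<le> e1 * t powr (a - 1)" if "t \<ge> T2" for t
  proof -
    have tp: "t > 0" using that T2 by simp
    have "\<bar>a * h t + t * h' t - q\<bar> \<le> e1" using T1[of t] that T2 by (simp add: dist_real_def)
    then have "t powr (a - 1) * \<bar>a * h t + t * h' t - q\<bar> \<le> t powr (a - 1) * e1"
      by (intro mult_left_mono) auto
    then show ?thesis unfolding ud_eq[OF tp] by (simp add: abs_mult mult.commute)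
  qed
  have pd: "((\<lambda>t. e1 / a * t powr a) has_real_derivative e1 * t powr (a - 1)) (at t)" if "t \<ge> T2" for t
    using that T2 a by (auto intro!: derivative_eq_intros)
  have up: "u t \<le> u T2 + e1 / a * t powr a" if "t \<ge> T2" for t
  proof -
    have "u t - e1 / a * t powr a \<le> u T2 - e1 / a * T2 powr a"
    proof (rule deriv_noninc[of T2 "\<lambda>t. u t - e1 / a * t powr a" "\<lambda>t. ud t - e1 * t powr (a - 1)" T2 t])
      fix s assume "T2 \<le> s"
      then show "((\<lambda>t. u t - e1 / a * t powr a) has_real_derivative ud s - e1 * s powr (a - 1)) (at s)"
        using ud pd by (intro DERIV_diff) auto
      show "ud s - e1 * s powr (a - 1) \<le> 0" using ud_le[OF \<open>T2 \<le> s\<close>] by linarith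
    qed (use that in auto)
    moreover have "e1 / a * T2 powr a \<ge> 0" using e1 a by simp
    ultimately show ?thesis by linarith
  qed
  have lo: "u t \<ge> u T2 - e1 / a * t powr a" if "t \<ge> T2" for t
  proof -
    have "- u t - e1 / a * t powr a \<le> - u T2 - e1 / a * T2 powr a"
    proof (rule deriv_noninc[of T2 "\<lambda>t. - u t - e1 / a * t powr a" "\<lambda>t. - ud t - e1 * t powr (a - 1)" T2 t])
      fix s assume "T2 \<le> s"
      then show "((\<lambda>t. - u t - e1 / a * t powr a) has_real_derivative - ud s - e1 * s powr (a - 1)) (at s)"
        using ud pd by (intro DERIV_diff DERIV_minus) auto
      show "- ud s - e1 * s powr (a - 1) \<le> 0" using ud_le[OF \<open>T2 \<le> s\<close>] by linarith
    qed (use that in auto)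
    moreover have "e1 / a * T2 powr a \<ge> 0" using e1 a by simp
    ultimately show ?thesis by linarith
  qed
  have lim0: "((\<lambda>t. \<bar>u T2\<bar> / t powr a) \<longlongrightarrow> 0) at_top"
    using a by real_asymp
  obtain T3 where T3: "\<And>t. t \<ge> T3 \<Longrightarrow> \<bar>u T2\<bar> / t powr a < e / 2"
    using tendstoD[OF lim0, of "e/2"] e unfolding eventually_at_top_linorder by (auto simp: dist_real_def)
  show "\<forall>\<^sub>F t in at_top. dist (h t) (q / a) < e"
    unfolding eventually_at_top_linorder
  proof (intro exI[of _ "max T2 T3"] allI impI)
    fix t assume t: "max T2 T3 \<le> t"
    have tp: "t > 0" "t powr a > 0" using t T2 by auto
    have "\<bar>u t\<bar> \<le> \<bar>u T2\<bar> + e1 / a * t powr a" using up[of t] lo[of t] t by auto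
    then have "\<bar>h t - q / a\<bar> * t powr a \<le> \<bar>u T2\<bar> + e1 / a * t powr a"
      unfolding u_def using tp by (simp add: abs_mult mult.commute)
    then have "\<bar>h t - q / a\<bar> \<le> \<bar>u T2\<bar> / t powr a + e1 / a"
      using tp by (simp add: field_simps)
    also have "\<dots> < e / 2 + e / 2"
    proof -
      have "\<bar>u T2\<bar> / t powr a < e / 2" using T3[of t] t by simp
      moreover have "e1 / a = e / 2" unfolding e1_def using a by simp
      ultimately show ?thesis by linarith
    qed
    finally show "dist (h t) (q / a) < e" by (simp add: dist_real_def)
  qed
qed

context dyn begin

definition "Tb = max (t0 + 1) Ti"
definition "psi t = (t + L * t\<^sup>2) * norm (e t)"
definition "Phi t = integral {Tb..t} psi"
definition "Ibd = integral {Ti..} psi"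

lemma Tb: "Tb > t0" "Tb \<ge> Ti" unfolding Tb_def by auto

lemma psi_nonneg: "t \<ge> 0 \<Longrightarrow> psi t \<ge> 0"
  unfolding psi_def using L0 by simp

lemma psi_cont: "continuous_on {t0..} psi"
  unfolding psi_def by (intro continuous_intros ecnt)

lemma psi_int_Ti: "psi integrable_on {Ti..}"
  using set_borel_integral_eq_integral(1)[OF eint] unfolding psi_def .

lemma psi_int_iv: "a \<ge> t0 \<Longrightarrow> psi integrable_on {a..b}"
  by (rule integrable_continuous_real) (rule continuous_on_subset[OF psi_cont], auto)

lemma Phi_deriv: assumes "t > Tb" shows "(Phi has_real_derivative psi t) (at t)"
proof -
  have "(Phi has_real_derivative psi t) (at t within {Tb..t+1})"
    unfolding Phi_def[abs_def] using assms Tb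
    by (intro integral_has_real_derivative continuous_on_subset[OF psi_cont]) auto
  moreover have "at t within {Tb..t+1} = at t" using assms by (intro at_within_interior) auto
  ultimately show ?thesis by simp
qed

lemma Phi_nonneg: "t \<ge> Tb \<Longrightarrow> Phi t \<ge> 0"
  unfolding Phi_def using Tb t0 by (intro integral_nonneg psi_int_iv psi_nonneg) auto

lemma Phi_le: assumes "t \<ge> Tb" shows "Phi t \<le> Ibd"
  unfolding Phi_def Ibd_def
proof (rule integral_subset_le)
  show "{Tb..t} \<subseteq> {Ti..}" using Tb by auto
  show "psi integrable_on {Tb..t}" using Tb by (intro psi_int_iv) auto
  show "psi integrable_on {Ti..}" by (rule psi_int_Ti)
  show "\<forall>x\<in>{Ti..}. 0 \<le> psi x" using Ti t0 by (auto intro!: psi_nonneg)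
qed

lemma Phi_mono: assumes "Tb < s" "s \<le> t" shows "Phi s \<le> Phi t"
proof -
  have "- Phi t \<le> - Phi s"
  proof (rule deriv_noninc[of s "\<lambda>t. - Phi t" "\<lambda>t. - psi t" s t])
    fix r assume "s \<le> r"
    then show "((\<lambda>t. - Phi t) has_real_derivative - psi r) (at r)"
      using assms by (intro DERIV_minus Phi_deriv) auto
    show "- psi r \<le> 0" using psi_nonneg[of r] \<open>s \<le> r\<close> assms Tb t0 by auto
  qed (use assms in auto)
  then show ?thesis by simp
qed

lemma Phi_conv: "\<exists>l. (Phi \<longlongrightarrow> l) at_top"
proof -
  have "\<exists>l. ((\<lambda>t. - Phi t) \<longlongrightarrow> l) at_top"
    by (rule mono_conv[of "Tb + 1" _ "- Ibd"]) (use Phi_mono Phi_le in auto)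
  then show ?thesis using tendsto_minus by fastforce
qed

end

context dyn begin

definition "b1 = (\<alpha> + 1) / 2"
definition "dl = (\<alpha> - 3) / 4"

lemma b1: "b1 > 2" "b1 < \<alpha> - 1" "\<alpha> - 1 - b1 > 0" unfolding b1_def using al3 by auto
lemma dl: "dl > 0" "2 + dl - b1 = - dl" unfolding dl_def b1_def using al3 by (auto simp: field_simps)

lemma ev_kk: assumes "c < 1" shows "eventually (\<lambda>t. kk b t > c * t\<^sup>2) at_top"
proof -
  have "eventually (\<lambda>t. kk b t / t\<^sup>2 > c) at_top" using order_tendstoD(1)[OF lim_kk assms] .
  moreover have "eventually (\<lambda>t::real. t > 0) at_top" by (rule eventually_gt_at_top)
  ultimately show ?thesis by eventually_elim (simp add: field_simps)
qed

lemma ev_kk2: assumes "c > 1" shows "eventually (\<lambda>t. kk b t < c * t\<^sup>2) at_top"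
proof -
  have "eventually (\<lambda>t. kk b t / t\<^sup>2 < c) at_top" using order_tendstoD(2)[OF lim_kk assms] .
  moreover have "eventually (\<lambda>t::real. t > 0) at_top" by (rule eventually_gt_at_top)
  ultimately show ?thesis by eventually_elim (simp add: field_simps)
qed

lemma ev_kkd: assumes "c > 2" shows "eventually (\<lambda>t. kkd b t < c * t) at_top"
proof -
  have "eventually (\<lambda>t. kkd b t / t < c) at_top" using order_tendstoD(2)[OF lim_kkd assms] .
  moreover have "eventually (\<lambda>t::real. t > 0) at_top" by (rule eventually_gt_at_top)
  ultimately show ?thesis by eventually_elim (simp add: field_simps)
qed

lemma ev_bt: "eventually (\<lambda>t. t\<^sup>2 * bt t / D t < \<gamma> + 1) at_top"
  using order_tendstoD(2)[OF lim_kkdiff] by simp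

definition "good t \<longleftrightarrow> t > Tb \<and> t \<ge> 1 \<and> D t > 0 \<and> kk b1 t \<ge> t\<^sup>2 / 2 \<and> kk b1 t \<le> 2 * t\<^sup>2
   \<and> kk 0 t \<ge> t\<^sup>2 / 2 \<and> kk 0 t \<le> 2 * t\<^sup>2 \<and> kkd b1 t \<le> (2 + dl) * t \<and> kkd 0 t \<le> 3 * t
   \<and> t\<^sup>2 * bt t / D t \<le> \<gamma> + 1"

lemma ev_good: "eventually good at_top"
proof -
  have "eventually (\<lambda>t. t > Tb) at_top" by (rule eventually_gt_at_top)
  moreover have "eventually (\<lambda>t::real. t \<ge> 1) at_top" by (rule eventually_ge_at_top)
  moreover note ev_D
  moreover have "eventually (\<lambda>t. kk b1 t > 1/2 * t\<^sup>2) at_top" by (rule ev_kk) simp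
  moreover have "eventually (\<lambda>t. kk b1 t < 2 * t\<^sup>2) at_top" by (rule ev_kk2) simp
  moreover have "eventually (\<lambda>t. kk 0 t > 1/2 * t\<^sup>2) at_top" by (rule ev_kk) simp
  moreover have "eventually (\<lambda>t. kk 0 t < 2 * t\<^sup>2) at_top" by (rule ev_kk2) simp
  moreover have "eventually (\<lambda>t. kkd b1 t < (2 + dl) * t) at_top" by (rule ev_kkd) (use dl in simp)
  moreover have "eventually (\<lambda>t. kkd 0 t < 3 * t) at_top" by (rule ev_kkd) simp
  moreover note ev_bt
  ultimately show ?thesis unfolding good_def by eventually_elim auto
qed

lemma good_T: "\<exists>T. \<forall>t\<ge>T. good t"
  using ev_good unfolding eventually_at_top_linorder by blast

lemma gz: assumes "\<And>w. f z \<le> f w" shows "g z = 0"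
proof -
  have "(\<lambda>h. inner (g z) h) = (\<lambda>h. 0)"
    by (rule has_derivative_local_min[OF fg]) (use assms in auto)
  then have "inner (g z) (g z) = 0" by metis
  then show ?thesis by simp
qed

lemma kk_diff: assumes "t \<noteq> 0" shows "kk b t - kk 0 t = - b * t * (t\<^sup>2 * bt t / D t)"
  unfolding kk_def bt_def using assms by (cases "D t = 0") (simp_all add: field_simps power2_eq_square)

lemma EE_alt: "EE z b t = kk b t * F z t + (norm (b *\<^sub>R (x t - z) + t *\<^sub>R x' t))\<^sup>2 / 2
                 + b * (\<alpha> - 1 - b) / 2 * (norm (x t - z))\<^sup>2"
  unfolding EE_def by (simp only: power2_norm_eq_inner) (simp add: inner_add_left inner_add_right inner_commute algebra_simps power2_eq_square, simp add: field_simps)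

end

locale dynz = dyn + fixes z assumes zmin: "\<And>w. f z \<le> f w"
begin

definition "R t = norm (x t - z) + t * norm (x' t)"
definition "C0 = 2 * (\<gamma> + \<beta>) * (1 + \<gamma> + \<beta>) + b1 + 1"
definition "c2 = 2 / (b1 * (\<alpha> - 1 - b1))"
definition "C1 = (1 + b1) * (1 + c2) / 2 + 1"

lemma goodD: assumes "good t"
  shows "t > Tb" "t \<ge> 1" "D t > 0" "kk b1 t \<ge> t\<^sup>2 / 2" "kk b1 t \<le> 2 * t\<^sup>2"
   "kk 0 t \<ge> t\<^sup>2 / 2" "kk 0 t \<le> 2 * t\<^sup>2" "kkd b1 t \<le> (2 + dl) * t" "kkd 0 t \<le> 3 * t"
   "t\<^sup>2 * bt t / D t \<le> \<gamma> + 1" "t > t0" "t > 0"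
  using assms Tb t0 unfolding good_def by auto

lemma bt_bnd: assumes "t \<ge> 1" shows "bt t \<ge> 0" "bt t \<le> \<gamma> + \<beta>"
proof -
  show "bt t \<ge> 0" unfolding bt_def using ga0 be0 assms by simp
  have "\<beta> / t \<le> \<beta>" using be0 assms by (simp add: divide_le_eq mult_le_cancel_left1 order.trans[of _ \<beta>])
  then show "bt t \<le> \<gamma> + \<beta>" unfolding bt_def by simp
qed

lemma Fnn: "F z t \<ge> 0" unfolding F_def using zmin by simp

lemma subg_y: "inner (y t - z) (g (y t)) - F z t \<ge> 0"
proof -
  have "f z \<ge> f (y t) + inner (g (y t)) (z - y t)" by (rule subgrad[OF conv fg])
  then show ?thesis unfolding F_def by (simp add: inner_diff_left inner_diff_right inner_commute)
qed

lemma R_nonneg: "t \<ge> 0 \<Longrightarrow> R t \<ge> 0" unfolding R_def by simp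

lemma gyb: assumes "t \<ge> 1" shows "norm (g (y t)) \<le> L * ((1 + \<gamma> + \<beta>) * R t)"
proof -
  have g0: "g z = 0" by (rule gz[OF zmin])
  have "norm (g (y t)) = norm (g (y t) - g z)" using g0 by simp
  also have "\<dots> \<le> L * norm (y t - z)" by (rule lip)
  also have "norm (y t - z) \<le> (1 + \<gamma> + \<beta>) * R t"
  proof -
    have "norm (y t - z) = norm ((x t - z) + bt t *\<^sub>R x' t)" unfolding y_def by (simp add: algebra_simps)
    also have "\<dots> \<le> norm (x t - z) + bt t * norm (x' t)" using bt_bnd[OF assms] by (simp add: norm_triangle_le)
    also have "bt t * norm (x' t) \<le> (\<gamma> + \<beta>) * (t * norm (x' t))"
    proof -
      have "bt t * norm (x' t) \<le> (\<gamma> + \<beta>) * norm (x' t)" using bt_bnd[OF assms] by (simp add: mult_right_mono)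
      also have "\<dots> \<le> (\<gamma> + \<beta>) * (t * norm (x' t))" using assms ga0 be0
        by (intro mult_left_mono) (auto simp: mult_le_cancel_right1)
      finally show ?thesis .
    qed
    finally have "norm (y t - z) \<le> norm (x t - z) + (\<gamma> + \<beta>) * (t * norm (x' t))" by simp
    also have "\<dots> \<le> (1 + \<gamma> + \<beta>) * R t" unfolding R_def using ga0 be0 assms
      by (simp add: algebra_simps mult_left_mono)
    finally show ?thesis .
  qed
  then have "L * norm (y t - z) \<le> L * ((1 + \<gamma> + \<beta>) * R t)" using L0 by (rule mult_left_mono)
  finally show ?thesis .
qed

lemma eterm: assumes t: "t \<ge> 1" and b: "0 \<le> b" "b \<le> b1" and k: "0 \<le> kk b t" "kk b t \<le> 2 * t\<^sup>2"
  shows "- kk b t * bt t * inner (g (y t)) (e t) - t * inner (b *\<^sub>R (x t - z) + t *\<^sub>R x' t) (e t)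
         \<le> C0 * psi t * R t"
proof -
  define A where "A = L * t\<^sup>2 * norm (e t) * R t"
  define B where "B = t * norm (e t) * R t"
  have R0: "R t \<ge> 0" using t by (intro R_nonneg) simp
  have A0: "A \<ge> 0" unfolding A_def using L0 R0 by simp
  have B0: "B \<ge> 0" unfolding B_def using t R0 by simp
  have bt: "0 \<le> bt t" "bt t \<le> \<gamma> + \<beta>" using bt_bnd[OF t] by auto
  have "- kk b t * bt t * inner (g (y t)) (e t) \<le> kk b t * bt t * (norm (g (y t)) * norm (e t))"
  proof -
    have "- inner (g (y t)) (e t) \<le> norm (g (y t)) * norm (e t)"
      using Cauchy_Schwarz_ineq2[of "g (y t)" "e t"] by linarith
    then have "kk b t * bt t * (- inner (g (y t)) (e t)) \<le> kk b t * bt t * (norm (g (y t)) * norm (e t))"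
      using k bt by (intro mult_left_mono) auto
    then show ?thesis by simp
  qed
  also have "\<dots> \<le> (2 * t\<^sup>2) * (\<gamma> + \<beta>) * ((L * ((1 + \<gamma> + \<beta>) * R t)) * norm (e t))"
    using k bt gyb[OF t] by (intro mult_mono mult_right_mono) auto
  also have "\<dots> = 2 * (\<gamma> + \<beta>) * (1 + \<gamma> + \<beta>) * A" unfolding A_def by (simp add: algebra_simps)
  also have "\<dots> \<le> C0 * A" unfolding C0_def using A0 b1 by (intro mult_right_mono) auto
  finally have I1: "- kk b t * bt t * inner (g (y t)) (e t) \<le> C0 * A" .
  have "- t * inner (b *\<^sub>R (x t - z) + t *\<^sub>R x' t) (e t) \<le> t * (norm (b *\<^sub>R (x t - z) + t *\<^sub>R x' t) * norm (e t))"
  proof -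
    have "- inner (b *\<^sub>R (x t - z) + t *\<^sub>R x' t) (e t) \<le> norm (b *\<^sub>R (x t - z) + t *\<^sub>R x' t) * norm (e t)"
      using Cauchy_Schwarz_ineq2[of "b *\<^sub>R (x t - z) + t *\<^sub>R x' t" "e t"] by linarith
    then have "t * (- inner (b *\<^sub>R (x t - z) + t *\<^sub>R x' t) (e t)) \<le> t * (norm (b *\<^sub>R (x t - z) + t *\<^sub>R x' t) * norm (e t))"
      using t by (intro mult_left_mono) auto
    then show ?thesis by simp
  qed
  also have "\<dots> \<le> t * (((b1 + 1) * R t) * norm (e t))"
  proof -
    have "norm (b *\<^sub>R (x t - z) + t *\<^sub>R x' t) \<le> b * norm (x t - z) + t * norm (x' t)"
      using b t norm_triangle_le[of "b *\<^sub>R (x t - z)" "t *\<^sub>R x' t"] by simp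
    also have "\<dots> \<le> (b1 + 1) * R t"
    proof -
      have "b * norm (x t - z) \<le> (b1 + 1) * norm (x t - z)" using b by (intro mult_right_mono) auto
      moreover have "t * norm (x' t) \<le> (b1 + 1) * (t * norm (x' t))" using b1 t
        using mult_right_mono[of 1 "b1 + 1" "t * norm (x' t)"] by simp
      ultimately show ?thesis unfolding R_def by (simp add: algebra_simps)
    qed
    finally show ?thesis using t by (intro mult_left_mono mult_right_mono) auto
  qed
  also have "\<dots> = (b1 + 1) * B" unfolding B_def by (simp add: algebra_simps)
  also have "\<dots> \<le> C0 * B" unfolding C0_def using B0 ga0 be0 by (intro mult_right_mono) auto
  finally have I2: "- t * inner (b *\<^sub>R (x t - z) + t *\<^sub>R x' t) (e t) \<le> C0 * B" .
  have "C0 * A + C0 * B = C0 * psi t * R t" unfolding A_def B_def psi_def by (simp add: algebra_simps)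
  then show ?thesis using I1 I2 by linarith
qed

end

context dynz begin

lemma EEd_b1: assumes "good t" shows "EEd z b1 t \<le> - dl * t * F z t + C0 * psi t * R t"
proof -
  note g = goodD[OF assms]
  have k0: "0 \<le> kk b1 t" using g(4) by (smt (verit) zero_le_power2 divide_nonneg_pos)
  have bt: "0 \<le> bt t" using bt_bnd g by auto
  have "(kkd b1 t - t * b1) * F z t \<le> ((2 + dl) * t - t * b1) * F z t"
    using g(8) Fnn by (intro mult_right_mono) auto
  also have "\<dots> = (2 + dl - b1) * t * F z t" by (simp add: algebra_simps)
  also have "\<dots> = - dl * t * F z t" unfolding dl(2) ..
  finally have A: "(kkd b1 t - t * b1) * F z t \<le> - dl * t * F z t" .
  have B: "(\<alpha> - 1 - b1) * t * inner (x' t) (x' t) \<ge> 0" using b1 g by simp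
  have C: "kk b1 t * bt t * inner (g (y t)) (g (y t)) \<ge> 0" using k0 bt by simp
  have D': "t * b1 * (inner (y t - z) (g (y t)) - F z t) \<ge> 0" using subg_y b1 g by simp
  have E: "- kk b1 t * bt t * inner (g (y t)) (e t) - t * inner (b1 *\<^sub>R (x t - z) + t *\<^sub>R x' t) (e t)
         \<le> C0 * psi t * R t" using eterm[of t b1] g k0 b1 by auto
  show ?thesis unfolding EEd_def using A B C D' E by linarith
qed

lemma EEd_0: assumes "good t" shows "EEd z 0 t \<le> 3 * t * F z t + C0 * psi t * R t"
proof -
  note g = goodD[OF assms]
  have k0: "0 \<le> kk 0 t" using g(6) by (smt (verit) zero_le_power2 divide_nonneg_pos)
  have bt: "0 \<le> bt t" using bt_bnd g by auto
  have A: "(kkd 0 t - t * 0) * F z t \<le> 3 * t * F z t"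
    using g(9) Fnn by (simp add: mult_right_mono)
  have B: "(\<alpha> - 1 - 0) * t * inner (x' t) (x' t) \<ge> 0" using al3 g by simp
  have C: "kk 0 t * bt t * inner (g (y t)) (g (y t)) \<ge> 0" using k0 bt by simp
  have E: "- kk 0 t * bt t * inner (g (y t)) (e t) - t * inner (0 *\<^sub>R (x t - z) + t *\<^sub>R x' t) (e t)
         \<le> C0 * psi t * R t" using eterm[of t 0] g k0 b1 by auto
  show ?thesis unfolding EEd_def using A B C E by simp
qed

lemma EE_lower: assumes "good t" "b = 0 \<or> b = b1"
  shows "EE z b t \<ge> kk b t * F z t" "EE z b t \<ge> 0"
proof -
  note g = goodD[OF assms(1)]
  have k0: "0 \<le> kk b t" using g(4) g(6) assms(2) by (smt (verit) zero_le_power2 divide_nonneg_pos)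
  have "b * (\<alpha> - 1 - b) / 2 * (norm (x t - z))\<^sup>2 \<ge> 0" using assms(2) b1 by auto
  then show "EE z b t \<ge> kk b t * F z t" unfolding EE_alt by simp
  then show "EE z b t \<ge> 0" using k0 Fnn by (smt (verit) mult_nonneg_nonneg)
qed

lemma half_sq: "(u::real) \<le> (1 + u\<^sup>2) / 2"
proof -
  have "0 \<le> (u - 1)\<^sup>2" by simp
  then show ?thesis by (simp add: power2_eq_square algebra_simps)
qed

lemma c2: "c2 > 0" unfolding c2_def using b1 by simp

lemma R_le: assumes "good t" shows "R t \<le> C1 * (1 + EE z b1 t)"
proof -
  note g = goodD[OF assms]
  define E where "E = EE z b1 t"
  define w where "w = b1 *\<^sub>R (x t - z) + t *\<^sub>R x' t"
  have k0: "0 \<le> kk b1 t" using g(4) by (smt (verit) zero_le_power2 divide_nonneg_pos)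
  have kF: "kk b1 t * F z t \<ge> 0" using k0 Fnn by simp
  have pos: "b1 * (\<alpha> - 1 - b1) / 2 > 0" using b1 by simp
  have Ealt: "E = kk b1 t * F z t + (norm w)\<^sup>2 / 2 + b1 * (\<alpha> - 1 - b1) / 2 * (norm (x t - z))\<^sup>2"
    unfolding E_def w_def EE_alt ..
  have E0: "E \<ge> 0" using EE_lower(2)[OF assms] unfolding E_def by simp
  have pp0: "b1 * (\<alpha> - 1 - b1) / 2 * (norm (x t - z))\<^sup>2 \<ge> 0" using pos by simp
  have w2: "(norm w)\<^sup>2 \<le> 2 * E" using Ealt kF pp0 by linarith
  have p2: "(norm (x t - z))\<^sup>2 \<le> c2 * E"
  proof -
    have "b1 * (\<alpha> - 1 - b1) / 2 * (norm (x t - z))\<^sup>2 \<le> E" using Ealt kF by simp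
    then show ?thesis unfolding c2_def using pos by (simp add: field_simps)
  qed
  have tv: "t * norm (x' t) \<le> norm w + b1 * norm (x t - z)"
  proof -
    have "t * norm (x' t) = norm (w - b1 *\<^sub>R (x t - z))" unfolding w_def using g by simp
    also have "\<dots> \<le> norm w + norm (b1 *\<^sub>R (x t - z))" by (rule norm_triangle_ineq4)
    finally show ?thesis using b1 by simp
  qed
  have "R t \<le> (1 + b1) * norm (x t - z) + norm w" unfolding R_def using tv by (simp add: algebra_simps)
  also have "\<dots> \<le> (1 + b1) * ((1 + c2 * E) / 2) + (1 + 2 * E) / 2"
  proof -
    have "norm (x t - z) \<le> (1 + c2 * E) / 2" using half_sq[of "norm (x t - z)"] p2 by simp
    moreover have "norm w \<le> (1 + 2 * E) / 2" using half_sq[of "norm w"] w2 by simp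
    ultimately show ?thesis using b1 by (smt (verit) mult_left_mono)
  qed
  also have "\<dots> \<le> C1 * (1 + E)"
  proof -
    have "1 + c2 * E \<le> (1 + c2) * (1 + E)" using c2 E0 by (simp add: algebra_simps)
    then have "(1 + b1) * ((1 + c2 * E) / 2) \<le> (1 + b1) * ((1 + c2) * (1 + E) / 2)"
      using b1 by (intro mult_left_mono) auto
    moreover have "C1 * (1 + E) = (1 + b1) * ((1 + c2) * (1 + E) / 2) + (1 + E)"
      unfolding C1_def by (simp add: algebra_simps)
    moreover have "(1 + 2 * E) / 2 \<le> 1 + E" using E0 by simp
    ultimately show ?thesis by linarith
  qed
  finally show ?thesis unfolding E_def .
qed

end

context dynz begin

definition "TT = (SOME T. \<forall>t\<ge>T. good t)"
lemma TT_good: "t \<ge> TT \<Longrightarrow> good t"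
  using someI_ex[OF good_T] unfolding TT_def by blast

lemma TT: "TT > Tb" "TT > t0" "TT > 0" using goodD[OF TT_good[of TT]] by auto

lemma C0_pos: "C0 > 0" unfolding C0_def using ga0 be0 b1 by (simp add: add_pos_nonneg)
lemma C1_pos: "C1 > 0" unfolding C1_def using b1 c2 by (simp add: add_pos_nonneg)

definition "CC = C0 * C1"
definition "Mb = (1 + EE z b1 TT) * exp (CC * Ibd)"
definition "R0 = C1 * (1 + Mb)"

lemma EE_d: assumes "t \<ge> TT" shows "(EE z b has_real_derivative EEd z b t) (at t)"
proof -
  note g = goodD[OF TT_good[OF assms]]
  show ?thesis by (rule EE_deriv) (use g in auto)
qed

lemma psi_nn: "t \<ge> TT \<Longrightarrow> psi t \<ge> 0" using TT by (intro psi_nonneg) auto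

lemma E_bound: assumes "t \<ge> TT" shows "EE z b1 t \<le> Mb"
proof -
  define H where "H s = (1 + EE z b1 s) * exp (- CC * Phi s)" for s
  define H' where "H' s = EEd z b1 s * exp (- CC * Phi s) + (1 + EE z b1 s) * (exp (- CC * Phi s) * (- CC * psi s))" for s
  have Hd: "(H has_real_derivative H' s) (at s)" if "s \<ge> TT" for s
    unfolding H_def[abs_def] H'_def using that TT
    by (auto intro!: derivative_eq_intros EE_d Phi_deriv)
  have Hn: "H' s \<le> 0" if "s \<ge> TT" for s
  proof -
    have g: "good s" using TT_good that .
    have "EEd z b1 s \<le> - dl * s * F z s + C0 * psi s * R s" by (rule EEd_b1[OF g])
    also have "\<dots> \<le> C0 * psi s * R s" using dl Fnn goodD[OF g] by (simp add: mult_nonneg_nonneg)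
    also have "\<dots> \<le> C0 * psi s * (C1 * (1 + EE z b1 s))"
      using R_le[OF g] C0_pos psi_nn[OF that] by (intro mult_left_mono) auto
    finally have "EEd z b1 s \<le> CC * psi s * (1 + EE z b1 s)" unfolding CC_def by (simp add: algebra_simps)
    then have "EEd z b1 s - CC * psi s * (1 + EE z b1 s) \<le> 0" by simp
    then have "exp (- CC * Phi s) * (EEd z b1 s - CC * psi s * (1 + EE z b1 s)) \<le> 0"
      by (simp add: mult_nonneg_nonpos)
    then show ?thesis unfolding H'_def by (simp add: algebra_simps)
  qed
  have "H t \<le> H TT" by (rule deriv_noninc[OF Hd Hn]) (use assms in auto)
  also have "\<dots> \<le> 1 + EE z b1 TT"
  proof -
    have "exp (- CC * Phi TT) \<le> 1" using Phi_nonneg[of TT] TT CC_def C0_pos C1_pos by simp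
    moreover have "1 + EE z b1 TT \<ge> 0" using EE_lower(2)[OF TT_good[of TT]] by simp
    ultimately show ?thesis unfolding H_def by (simp add: mult_left_le)
  qed
  finally have "(1 + EE z b1 t) * exp (- CC * Phi t) \<le> 1 + EE z b1 TT" unfolding H_def .
  then have "1 + EE z b1 t \<le> (1 + EE z b1 TT) * exp (CC * Phi t)"
    by (simp add: exp_minus field_simps)
  also have "\<dots> \<le> (1 + EE z b1 TT) * exp (CC * Ibd)"
  proof -
    have "CC * Phi t \<le> CC * Ibd" using Phi_le[of t] assms TT CC_def C0_pos C1_pos by (intro mult_left_mono) auto
    moreover have "1 + EE z b1 TT \<ge> 0" using EE_lower(2)[OF TT_good[of TT]] by simp
    ultimately show ?thesis by (intro mult_left_mono) auto
  qed
  finally show ?thesis unfolding Mb_def by simp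
qed

lemma R_bound: "t \<ge> TT \<Longrightarrow> R t \<le> R0"
  using R_le[OF TT_good, of t] E_bound[of t] C1_pos unfolding R0_def
  by (smt (verit) mult_left_mono)

end

context dynz begin

lemma Phi_lim: obtains lP where "(Phi \<longlongrightarrow> lP) at_top" using Phi_conv by blast

lemma Ibd_nn: "Ibd \<ge> 0" using Phi_le[of Tb] Phi_nonneg[of Tb] by simp

lemma E_conv: "\<exists>lE. (EE z b1 \<longlongrightarrow> lE) at_top"
proof -
  define P where "P s = EE z b1 s - C0 * R0 * Phi s" for s
  have Pd: "(P has_real_derivative (EEd z b1 s - C0 * R0 * psi s)) (at s)" if "s \<ge> TT" for s
    unfolding P_def[abs_def] using that TT by (auto intro!: derivative_eq_intros EE_d Phi_deriv)
  have Pn: "EEd z b1 s - C0 * R0 * psi s \<le> 0" if "s \<ge> TT" for s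
  proof -
    have g: "good s" using TT_good that .
    have "EEd z b1 s \<le> - dl * s * F z s + C0 * psi s * R s" by (rule EEd_b1[OF g])
    also have "\<dots> \<le> C0 * psi s * R s" using dl Fnn goodD[OF g] by (simp add: mult_nonneg_nonneg)
    also have "\<dots> \<le> C0 * psi s * R0"
      using R_bound[OF that] C0_pos psi_nn[OF that] by (intro mult_left_mono) auto
    finally show ?thesis by (simp add: algebra_simps)
  qed
  have "\<exists>l. (P \<longlongrightarrow> l) at_top"
  proof (rule mono_conv[of TT _ "- C0 * R0 * Ibd"])
    show "P t \<le> P s" if "TT \<le> s" "s \<le> t" for s t by (rule deriv_noninc[OF Pd Pn]) (use that in auto)
    show "- C0 * R0 * Ibd \<le> P t" if "TT \<le> t" for t
    proof -
      have "C0 * R0 * Phi t \<le> C0 * R0 * Ibd"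
        using Phi_le[of t] that TT C0_pos R_bound[OF that] R_nonneg[of t] by (intro mult_left_mono) auto
      moreover have "EE z b1 t \<ge> 0" using EE_lower(2)[OF TT_good[OF that]] by simp
      ultimately show ?thesis unfolding P_def by simp
    qed
  qed
  then obtain l where l: "(P \<longlongrightarrow> l) at_top" by blast
  obtain lP where lP: "(Phi \<longlongrightarrow> lP) at_top" by (rule Phi_lim)
  have "((\<lambda>s. P s + C0 * R0 * Phi s) \<longlongrightarrow> l + C0 * R0 * lP) at_top" by (intro tendsto_intros l lP)
  moreover have "(\<lambda>s. P s + C0 * R0 * Phi s) = EE z b1" unfolding P_def by auto
  ultimately show ?thesis by auto
qed

definition "KK = C0 * R0 + 3 / dl * (C0 * R0)"
definition "P2 s = EE z 0 s + 3 / dl * EE z b1 s - KK * Phi s"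
definition "Wb = P2 TT + KK * Ibd"

lemma P2_mono: assumes "TT \<le> s" "s \<le> t" shows "P2 t \<le> P2 s"
proof -
  have Pd: "(P2 has_real_derivative (EEd z 0 r + 3 / dl * EEd z b1 r - KK * psi r)) (at r)" if "r \<ge> TT" for r
    unfolding P2_def[abs_def] using that TT dl by (auto intro!: derivative_eq_intros EE_d Phi_deriv)
  have Pn: "EEd z 0 r + 3 / dl * EEd z b1 r - KK * psi r \<le> 0" if "r \<ge> TT" for r
  proof -
    have g: "good r" using TT_good that .
    have cR: "C0 * psi r * R r \<le> C0 * R0 * psi r"
      using R_bound[OF that] C0_pos psi_nn[OF that] mult_left_mono[of "R r" R0 "C0 * psi r"] by (simp add: algebra_simps)
    have "3 / dl * EEd z b1 r \<le> 3 / dl * (- dl * r * F z r + C0 * psi r * R r)"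
      using EEd_b1[OF g] dl by (intro mult_left_mono) auto
    also have "\<dots> = - 3 * r * F z r + 3 / dl * (C0 * psi r * R r)" using dl by (simp add: field_simps)
    also have "\<dots> \<le> - 3 * r * F z r + 3 / dl * (C0 * R0 * psi r)"
    proof -
      have "3 / dl * (C0 * psi r * R r) \<le> 3 / dl * (C0 * R0 * psi r)" using cR dl by (intro mult_left_mono) auto
      then show ?thesis by simp
    qed
    finally have A: "3 / dl * EEd z b1 r \<le> - 3 * r * F z r + 3 / dl * (C0 * R0 * psi r)" .
    have B: "EEd z 0 r \<le> 3 * r * F z r + C0 * R0 * psi r" using EEd_0[OF g] cR by linarith
    have "KK * psi r = C0 * R0 * psi r + 3 / dl * (C0 * R0 * psi r)" unfolding KK_def by (simp add: algebra_simps)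
    then show ?thesis using A B by linarith
  qed
  show ?thesis by (rule deriv_noninc[OF Pd Pn]) (use assms in auto)
qed

lemma KK_nn: "KK \<ge> 0"
proof -
  have "R0 \<ge> 0" using R_bound[of TT] R_nonneg[of TT] TT by auto
  then show ?thesis unfolding KK_def using C0_pos dl by simp
qed

lemma W_bound: assumes "t \<ge> TT" shows "EE z 0 t \<le> Wb"
proof -
  have "EE z b1 t \<ge> 0" using EE_lower(2)[OF TT_good[OF assms]] by simp
  then have "EE z 0 t \<le> P2 t + KK * Phi t" unfolding P2_def using dl by simp
  also have "\<dots> \<le> P2 TT + KK * Ibd"
    using P2_mono[of TT t] assms Phi_le[of t] TT KK_nn mult_left_mono[of "Phi t" Ibd KK] by simp
  finally show ?thesis unfolding Wb_def .
qed

lemma W_conv: "\<exists>lW. (EE z 0 \<longlongrightarrow> lW) at_top"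
proof -
  have "\<exists>l. (P2 \<longlongrightarrow> l) at_top"
  proof (rule mono_conv[of TT _ "- KK * Ibd"])
    show "P2 t \<le> P2 s" if "TT \<le> s" "s \<le> t" for s t using P2_mono that by auto
    show "- KK * Ibd \<le> P2 t" if "TT \<le> t" for t
    proof -
      have "KK * Phi t \<le> KK * Ibd" using Phi_le[of t] that TT KK_nn by (intro mult_left_mono) auto
      moreover have "EE z b1 t \<ge> 0" "EE z 0 t \<ge> 0" using EE_lower(2)[OF TT_good[OF that]] by auto
      moreover have "3 / dl * EE z b1 t \<ge> 0" using dl \<open>EE z b1 t \<ge> 0\<close> by simp
      ultimately show ?thesis unfolding P2_def by linarith
    qed
  qed
  then obtain l where l: "(P2 \<longlongrightarrow> l) at_top" by blast
  obtain lP where lP: "(Phi \<longlongrightarrow> lP) at_top" by (rule Phi_lim)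
  obtain lE where lE: "(EE z b1 \<longlongrightarrow> lE) at_top" using E_conv by blast
  have "((\<lambda>s. P2 s - 3 / dl * EE z b1 s + KK * Phi s) \<longlongrightarrow> l - 3 / dl * lE + KK * lP) at_top"
    by (intro tendsto_intros l lP lE)
  moreover have "(\<lambda>s. P2 s - 3 / dl * EE z b1 s + KK * Phi s) = EE z 0" unfolding P2_def by auto
  ultimately show ?thesis by auto
qed

lemma F_bound: assumes "t \<ge> TT" shows "F z t \<le> 2 * Wb / t\<^sup>2"
proof -
  note g = goodD[OF TT_good[OF assms]]
  have "t\<^sup>2 / 2 * F z t \<le> kk 0 t * F z t" using g(6) Fnn by (intro mult_right_mono) auto
  also have "\<dots> \<le> Wb" using EE_lower(1)[OF TT_good[OF assms], of 0] W_bound[OF assms] by simp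
  finally show ?thesis using g(12) by (simp add: field_simps)
qed

lemma F_lim: "((\<lambda>t. F z t) \<longlongrightarrow> 0) at_top"
proof (rule Lim_null_comparison)
  show "\<forall>\<^sub>F t in at_top. norm (F z t) \<le> 2 * Wb / t\<^sup>2"
    using eventually_ge_at_top[of TT] by eventually_elim (use F_bound Fnn in auto)
  have "((\<lambda>t. c / t\<^sup>2) \<longlongrightarrow> 0) at_top" for c :: real by real_asymp
  then show "((\<lambda>t. 2 * Wb / t\<^sup>2) \<longlongrightarrow> 0) at_top" .
qed

end

context dynz begin

lemma EE_diff: "EE z b1 t - EE z 0 t = (kk b1 t - kk 0 t) * F z t
   + b1 * ((\<alpha> - 1) * (inner (x t - z) (x t - z) / 2) + t * inner (x t - z) (x' t))"
proof -
  have aux: "(k1 * FF + A + b1 * t * B + b1 * (\<alpha> - 1) / 2 * C) - (k0 * FF + A + 0 * t * B + 0 * (\<alpha> - 1) / 2 * C)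
      = (k1 - k0) * FF + b1 * ((\<alpha> - 1) * (C / 2) + t * B)" for k1 k0 FF A B C :: real
    by (simp add: algebra_simps)
  show ?thesis unfolding EE_def by (rule aux)
qed

lemma kkF_lim: "((\<lambda>t. (kk b1 t - kk 0 t) * F z t) \<longlongrightarrow> 0) at_top"
proof (rule Lim_null_comparison)
  show "\<forall>\<^sub>F t in at_top. norm ((kk b1 t - kk 0 t) * F z t) \<le> 2 * b1 * (\<gamma> + 1) * Wb / t"
    using eventually_ge_at_top[of TT]
  proof eventually_elim
    case (elim t)
    note g = goodD[OF TT_good[OF elim]]
    have q0: "t\<^sup>2 * bt t / D t \<ge> 0" using bt_bnd[OF g(2)] g(3) by simp
    have "norm ((kk b1 t - kk 0 t) * F z t) = b1 * t * (t\<^sup>2 * bt t / D t) * F z t"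
      unfolding kk_diff[of t b1, OF g(12)[THEN less_imp_neq, symmetric]] using q0 b1 g Fnn bt_bnd[OF g(2)] by (simp add: abs_mult)
    also have "\<dots> \<le> b1 * t * (\<gamma> + 1) * (2 * Wb / t\<^sup>2)"
      using b1 g q0 Fnn F_bound[OF elim] by (intro mult_mono) auto
    also have "\<dots> = 2 * b1 * (\<gamma> + 1) * Wb / t" using g by (simp add: field_simps power2_eq_square)
    finally show ?case .
  qed
  have "((\<lambda>t. c / t) \<longlongrightarrow> 0) at_top" for c :: real by real_asymp
  then show "((\<lambda>t. 2 * b1 * (\<gamma> + 1) * Wb / t) \<longlongrightarrow> 0) at_top" .
qed

lemma dist_lim: "\<exists>l. ((\<lambda>t. norm (x t - z)) \<longlongrightarrow> l) at_top"
proof -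
  obtain lE where lE: "(EE z b1 \<longlongrightarrow> lE) at_top" using E_conv by blast
  obtain lW where lW: "(EE z 0 \<longlongrightarrow> lW) at_top" using W_conv by blast
  define h where "h t = inner (x t - z) (x t - z) / 2" for t
  define h' where "h' t = inner (x t - z) (x' t)" for t
  have "((\<lambda>t. (EE z b1 t - EE z 0 t - (kk b1 t - kk 0 t) * F z t) / b1) \<longlongrightarrow> (lE - lW - 0) / b1) at_top"
    by (intro tendsto_intros lE lW kkF_lim) (use b1 in auto)
  moreover have "(EE z b1 t - EE z 0 t - (kk b1 t - kk 0 t) * F z t) / b1 = (\<alpha> - 1) * h t + t * h' t" for t
    unfolding EE_diff h_def h'_def using b1 by simp
  ultimately have Q: "((\<lambda>t. (\<alpha> - 1) * h t + t * h' t) \<longlongrightarrow> (lE - lW) / b1) at_top" by simp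
  have hd: "(h has_real_derivative h' t) (at t)" if "t \<ge> TT" for t
  proof -
    have t: "t > t0" using TT that by simp
    have xz: "((\<lambda>s. x s - z) has_vector_derivative x' t) (at t)"
      using has_vector_derivative_diff[OF xd[OF t] has_vector_derivative_const[of z]] by simp
    have "((\<lambda>s. inner (x s - z) (x s - z)) has_real_derivative inner (x' t) (x t - z) + inner (x t - z) (x' t)) (at t)"
      by (rule inner_hvd[OF xz xz])
    from DERIV_cdivide[OF this, of 2] show ?thesis unfolding h_def[abs_def] h'_def by (simp add: inner_commute)
  qed
  have hl: "(h \<longlongrightarrow> (lE - lW) / b1 / (\<alpha> - 1)) at_top"
    by (rule ode_lim[OF _ TT(3) hd Q]) (use al3 in auto)
  have "((\<lambda>t. sqrt (2 * h t)) \<longlongrightarrow> sqrt (2 * ((lE - lW) / b1 / (\<alpha> - 1)))) at_top"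
    by (intro tendsto_intros hl)
  moreover have "sqrt (2 * h t) = norm (x t - z)" for t unfolding h_def by (simp add: norm_eq_sqrt_inner)
  ultimately show ?thesis by auto
qed

lemma dist_bnd: "t \<ge> TT \<Longrightarrow> norm (x t - z) \<le> R0"
  using R_bound[of t] goodD[OF TT_good, of t] unfolding R_def by (smt (verit) mult_nonneg_nonneg norm_ge_zero)

lemma yx_lim: "((\<lambda>t. norm (y t - x t)) \<longlongrightarrow> 0) at_top"
proof (rule Lim_null_comparison)
  show "\<forall>\<^sub>F t in at_top. norm (norm (y t - x t)) \<le> (\<gamma> + \<beta>) * R0 / t"
    using eventually_ge_at_top[of TT]
  proof eventually_elim
    case (elim t)
    note g = goodD[OF TT_good[OF elim]]
    have "t * norm (x' t) \<le> R0" using R_bound[OF elim] norm_ge_zero[of "x t - z"] unfolding R_def by linarith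
    then have v: "norm (x' t) \<le> R0 / t" using g by (simp add: field_simps)
    have "norm (norm (y t - x t)) = bt t * norm (x' t)" unfolding y_def using bt_bnd[OF g(2)] by simp
    also have "\<dots> \<le> (\<gamma> + \<beta>) * (R0 / t)" using bt_bnd[OF g(2)] v by (intro mult_mono) auto
    finally show ?case by simp
  qed
  have "((\<lambda>t. c / t) \<longlongrightarrow> 0) at_top" for c :: real by real_asymp
  then show "((\<lambda>t. (\<gamma> + \<beta>) * R0 / t) \<longlongrightarrow> 0) at_top" .
qed

end

lemma int_transfer:
  fixes e :: "real \<Rightarrow> 'a::real_normed_vector" and m :: "real \<Rightarrow> real"
  assumes eL: "set_integrable lborel {t0..} (\<lambda>t. m t * norm (e t))" and Ti: "Ti \<ge> t0" and t0: "t0 > 0"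
    and ec: "continuous_on {t0..} e" and b: "\<And>t. t \<ge> Ti \<Longrightarrow> t + L * t\<^sup>2 \<le> Cm * m t"
    and Cm: "Cm > 0" and L0: "L \<ge> 0"
  shows "set_integrable lborel {Ti..} (\<lambda>t. (t + L * t\<^sup>2) * norm (e t))"
proof (rule set_integrable_bound[of lborel "{Ti..}" "\<lambda>t. Cm * (m t * norm (e t))"])
  show "set_integrable lborel {Ti..} (\<lambda>t. Cm * (m t * norm (e t)))"
    using set_integrable_subset[OF eL _ ] Ti by (intro set_integrable_mult_right) auto
  have "continuous_on {Ti..} (\<lambda>t. (t + L * t\<^sup>2) * norm (e t))"
    using Ti by (intro continuous_intros continuous_on_subset[OF ec]) auto
  then show "set_borel_measurable lborel {Ti..} (\<lambda>t. (t + L * t\<^sup>2) * norm (e t))"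
    unfolding set_borel_measurable_def measurable_lborel2
    using borel_measurable_continuous_on_indicator[of "{Ti..}" "\<lambda>t. (t + L * t\<^sup>2) * norm (e t)"] by auto
  show "AE x in lborel. x \<in> {Ti..} \<longrightarrow> norm ((x + L * x\<^sup>2) * norm (e x)) \<le> norm (Cm * (m x * norm (e x)))"
  proof (intro always_eventually allI impI)
    fix x assume x: "x \<in> {Ti..}"
    have x0: "x + L * x\<^sup>2 \<ge> 0" using x Ti t0 L0 by simp
    have mx: "Cm * m x \<ge> 0" using b[of x] x x0 by simp
    have "norm ((x + L * x\<^sup>2) * norm (e x)) = (x + L * x\<^sup>2) * norm (e x)" using x0 by simp
    also have "\<dots> \<le> Cm * m x * norm (e x)" using b[of x] x by (intro mult_right_mono) auto
    also have "\<dots> = norm (Cm * (m x * norm (e x)))"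
    proof -
      have "m x \<ge> 0" using mx Cm by (simp add: zero_le_mult_iff)
      then show ?thesis using Cm by (simp add: abs_mult)
    qed
    finally show "norm ((x + L * x\<^sup>2) * norm (e x)) \<le> norm (Cm * (m x * norm (e x)))" .
  qed
qed

theorem theorem8:
  fixes f :: "'a::{real_inner, complete_space} \<Rightarrow> real"
    and gradf :: "'a \<Rightarrow> 'a"
    and L t0 \<alpha> \<gamma> \<beta> b :: real
    and bt a m :: "real \<Rightarrow> real"
    and e x x' x'' :: "real \<Rightarrow> 'a"
  assumes t0_pos: "t0 > 0"
    and f_convex: "convex_on UNIV f"
    and f_grad: "\<And>y. (f has_derivative (\<lambda>h. inner (gradf y) h)) (at y)"
    and grad_cont: "continuous_on UNIV gradf"
    and grad_lip: "L-lipschitz_on UNIV gradf"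
    and minimizer_exists: "\<exists>z. \<forall>y. f z \<le> f y"
    and alpha: "\<alpha> > 3" and gamma: "\<gamma> > 0" and beta: "\<beta> \<ge> 0"
    and bt_def: "\<And>t. bt t = \<gamma> + \<beta> / t"
    and b: "0 < b" "b \<le> \<alpha> - 1"
    and a_def: "\<And>t. a t = t\<^sup>2 * (1 + ((\<alpha> - b) * \<gamma> * t - \<beta> * (\<alpha> + 1 - b))
                                  / (t\<^sup>2 - \<alpha> * \<gamma> * t - \<beta> * (\<alpha> + 1)))"
    and m_def: "\<And>t. m t = max t (max (L * \<bar>a t * bt t\<bar>) (L * \<bar>a t\<bar> * (bt t)\<^sup>2))"
    and e_cont: "continuous_on {t0..} e"
    and e_L1: "set_integrable lborel {t0..} (\<lambda>t. m t * norm (e t))"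
    and x_deriv: "\<And>t. t \<ge> t0 \<Longrightarrow> (x has_vector_derivative x' t) (at t within {t0..})"
    and x'_deriv: "\<And>t. t \<ge> t0 \<Longrightarrow> (x' has_vector_derivative x'' t) (at t within {t0..})"
    and ode: "\<And>t. t \<ge> t0 \<Longrightarrow>
               x'' t + (\<alpha> / t) *\<^sub>R x' t + gradf (x t + bt t *\<^sub>R x' t) + e t = 0"
  shows "\<exists>z. (\<forall>y. f z \<le> f y) \<and> weakly_converges_at_top x z"
proof -
  have L0: "L \<ge> 0" using grad_lip unfolding lipschitz_on_def by simp
  have lip: "\<And>u w. norm (gradf u - gradf w) \<le> L * norm (u - w)"
    using grad_lip unfolding lipschitz_on_def by (simp add: dist_norm)
  have ab: "\<alpha> - b > 0" using b alpha by simp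
  have evN: "eventually (\<lambda>t. (\<alpha> - b) * \<gamma> * t - \<beta> * (\<alpha> + 1 - b) \<ge> 0) at_top"
    using ab gamma by real_asymp
  have evD: "eventually (\<lambda>t. t\<^sup>2 - \<alpha> * \<gamma> * t - \<beta> * (\<alpha> + 1) > 0) at_top"
    by real_asymp
  have "eventually (\<lambda>t. a t \<ge> t\<^sup>2) at_top"
    using evN evD
  proof eventually_elim
    case (elim t)
    then have "((\<alpha> - b) * \<gamma> * t - \<beta> * (\<alpha> + 1 - b)) / (t\<^sup>2 - \<alpha> * \<gamma> * t - \<beta> * (\<alpha> + 1)) \<ge> 0" by simp
    then show ?case unfolding a_def by (simp add: mult_le_cancel_left1)
  qed
  then obtain T1 where T1: "\<And>t. t \<ge> T1 \<Longrightarrow> a t \<ge> t\<^sup>2" unfolding eventually_at_top_linorder by blast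
  define Ti where "Ti = max t0 (max T1 1)"
  have Ti: "Ti \<ge> t0" "Ti \<ge> T1" "Ti \<ge> 1" unfolding Ti_def by auto
  have mb: "t + L * t\<^sup>2 \<le> (1 + 1 / \<gamma>\<^sup>2) * m t" if "t \<ge> Ti" for t
  proof -
    have t: "t > 0" using that Ti by simp
    have m1: "t \<le> m t" unfolding m_def by simp
    have bt: "bt t \<ge> \<gamma>" unfolding bt_def using beta t by simp
    have "L * t\<^sup>2 * \<gamma>\<^sup>2 \<le> L * \<bar>a t\<bar> * (bt t)\<^sup>2"
    proof -
      have "t\<^sup>2 \<le> \<bar>a t\<bar>" using T1[of t] that Ti by simp
      moreover have "\<gamma>\<^sup>2 \<le> (bt t)\<^sup>2" using bt gamma by (simp add: power_mono)
      ultimately have "t\<^sup>2 * \<gamma>\<^sup>2 \<le> \<bar>a t\<bar> * (bt t)\<^sup>2" by (intro mult_mono) auto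
      then show ?thesis using L0 by (simp add: mult.assoc mult_left_mono)
    qed
    also have "\<dots> \<le> m t" unfolding m_def by simp
    finally have "L * t\<^sup>2 \<le> m t / \<gamma>\<^sup>2" using gamma by (simp add: field_simps)
    then show ?thesis using m1 gamma by (simp add: algebra_simps)
  qed
  have eint: "set_integrable lborel {Ti..} (\<lambda>t. (t + L * t\<^sup>2) * norm (e t))"
    by (rule int_transfer[OF e_L1 Ti(1) t0_pos e_cont mb _ L0]) (use gamma in \<open>auto intro: add_pos_nonneg\<close>)
  have atw: "at t within {t0..} = at t" if "t > t0" for t
    using that by (intro at_within_interior) (simp add: interior_Ici[of "t0 - 1"])
  have xd: "(x has_vector_derivative x' t) (at t)" if "t > t0" for t
    using x_deriv[of t] that atw[OF that] by simp
  have x'd: "(x' has_vector_derivative x'' t) (at t)" if "t > t0" for t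
    using x'_deriv[of t] that atw[OF that] by simp
  have ode': "x'' t + (\<alpha> / t) *\<^sub>R x' t + gradf (x t + (\<gamma> + \<beta> / t) *\<^sub>R x' t) + e t = 0" if "t > t0" for t
    using ode[of t] that bt_def[of t] by simp
  interpret D: dyn f gradf L t0 \<alpha> \<gamma> \<beta> Ti x x' x'' e
    by unfold_locales (use t0_pos f_convex f_grad lip L0 alpha gamma beta e_cont Ti eint xd x'd ode' in auto)
  define S where "S = {z. \<forall>y. f z \<le> f y}"
  have zres: "(\<exists>l. ((\<lambda>t. norm (x t - z)) \<longlongrightarrow> l) at_top) \<and> (\<exists>T M. \<forall>t\<ge>T. norm (x t - z) \<le> M)
      \<and> ((\<lambda>t. D.F z t) \<longlongrightarrow> 0) at_top \<and> ((\<lambda>t. norm (D.y t - x t)) \<longlongrightarrow> 0) at_top" if "z \<in> S" for z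
  proof -
    interpret Z: dynz f gradf L t0 \<alpha> \<gamma> \<beta> Ti x x' x'' e z
      by unfold_locales (use that in \<open>auto simp: S_def\<close>)
    show ?thesis using Z.dist_lim Z.dist_bnd Z.F_lim Z.yx_lim by blast
  qed
  obtain z0 where z0: "z0 \<in> S" using minimizer_exists unfolding S_def by blast
  obtain T0 M0 where TM: "\<And>t. t \<ge> T0 \<Longrightarrow> norm (x t - z0) \<le> M0" using zres[OF z0] by blast
  have "\<exists>z\<in>S. weakly_converges_at_top x z"
  proof (rule opial[of T0 x "norm z0 + M0"])
    fix t assume "t \<ge> T0"
    then show "norm (x t) \<le> norm z0 + M0" using TM[of t] norm_triangle_sub[of "x t" z0] by simp
  next
    fix z assume "z \<in> S" then show "\<exists>l. ((\<lambda>t. norm (x t - z)) \<longlongrightarrow> l) at_top" using zres by blast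
  next
    fix s :: "nat \<Rightarrow> real" and u
    assume s: "filterlim s at_top sequentially"
      and wu: "\<forall>v. ((\<lambda>n. inner (x (s n)) v) \<longlongrightarrow> inner u v) sequentially"
    have Fl: "((\<lambda>t. D.F z0 t) \<longlongrightarrow> 0) at_top" and yl: "((\<lambda>t. norm (D.y t - x t)) \<longlongrightarrow> 0) at_top"
      using zres[OF z0] by auto
    have A: "((\<lambda>n. f (D.y (s n))) \<longlongrightarrow> f z0) sequentially"
    proof -
      have "((\<lambda>n. D.F z0 (s n) + f z0) \<longlongrightarrow> 0 + f z0) sequentially"
        by (intro tendsto_intros filterlim_compose[OF Fl s])
      then show ?thesis unfolding D.F_def by simp
    qed
    have B1: "((\<lambda>n. inner (gradf u) (x (s n) - u)) \<longlongrightarrow> 0) sequentially"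
    proof -
      have "((\<lambda>n. inner (x (s n)) (gradf u) - inner u (gradf u)) \<longlongrightarrow> inner u (gradf u) - inner u (gradf u)) sequentially"
        by (intro tendsto_intros wu[rule_format])
      then show ?thesis by (simp add: inner_diff_right inner_commute)
    qed
    have B2: "((\<lambda>n. inner (gradf u) (D.y (s n) - x (s n))) \<longlongrightarrow> 0) sequentially"
    proof (rule Lim_null_comparison)
      show "\<forall>\<^sub>F n in sequentially. norm (inner (gradf u) (D.y (s n) - x (s n))) \<le> norm (gradf u) * norm (D.y (s n) - x (s n))"
        by (intro always_eventually allI) (simp add: Cauchy_Schwarz_ineq2)
      have "((\<lambda>n. norm (D.y (s n) - x (s n))) \<longlongrightarrow> 0) sequentially" using filterlim_compose[OF yl s] by (simp add: o_def)
      then show "((\<lambda>n. norm (gradf u) * norm (D.y (s n) - x (s n))) \<longlongrightarrow> 0) sequentially"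
        using tendsto_mult_right_zero by blast
    qed
    have C: "((\<lambda>n. f u + inner (gradf u) (D.y (s n) - u)) \<longlongrightarrow> f u + (0 + 0)) sequentially"
    proof -
      have "((\<lambda>n. f u + (inner (gradf u) (x (s n) - u) + inner (gradf u) (D.y (s n) - x (s n)))) \<longlongrightarrow> f u + (0 + 0)) sequentially"
        by (intro tendsto_intros B1 B2)
      moreover have "inner (gradf u) (x (s n) - u) + inner (gradf u) (D.y (s n) - x (s n)) = inner (gradf u) (D.y (s n) - u)" for n
        by (simp add: inner_diff_right)
      ultimately show ?thesis by simp
    qed
    have "f u \<le> f z0"
    proof (rule tendsto_le[OF sequentially_bot A])
      show "((\<lambda>n. f u + inner (gradf u) (D.y (s n) - u)) \<longlongrightarrow> f u) sequentially" using C by simp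
      show "\<forall>\<^sub>F n in sequentially. f u + inner (gradf u) (D.y (s n) - u) \<le> f (D.y (s n))"
        by (intro always_eventually allI subgrad[OF f_convex f_grad])
    qed
    then show "u \<in> S" using z0 unfolding S_def by (auto intro: order_trans)
  qed
  then show ?thesis unfolding S_def by blast
qed

end
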